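(* Fix $n\ge1$ and let $\kappa_n=1+4\pi^2n^2D$. If $\kappa_n\neq3/2$, then a pitchfork bifurcation occurs at $(\kappa_n,\kappa_n)$, and its type is determined by the sign of $\alpha_n''(0)$: it is subcritical if $\alpha_n''(0)<0$, i.e. $\kappa_n<3/2$ (equivalently $0<D<(8n^2\pi^2)^{-1}$), and supercritical if $\alpha_n''(0)>0$, i.e. $\kappa_n>3/2$ (equivalently $D>(8n^2\pi^2)^{-1}$).
   Context: $\mathbb{T}=[0,1]$ with endpoints identified; $D>0$; stationary problem $0=DU_{xx}-U+\kappa e^U/\int_0^1e^Udy$, periodic, with trivial branch $U\equiv\kappa$. Near $(\kappa_n,\kappa_n)$ the nonconstant solutions form a smooth branch $\Gamma_n(s)=(\kappa_n+\alpha_n(s)+s\sqrt2\cos(2n\pi x)+sz_n(s),\ \kappa_n+\alpha_n(s))$, $|s|<\delta$, with $\alpha_n$ smooth, $\alpha_n(0)=\alpha_n'(0)=0$ and $z_n(0)=0$. The bifurcation is a pitchfork if $\alpha_n''(0)\ne0$; it is subcritical if $\kappa_n+\alpha_n(s)<\kappa_n$ for small $s\neq0$ (branch on the side where the trivial solution is stable) and supercritical if $\kappa_n+\alpha_n(s)>\kappa_n$ for small $s\ne0$. *)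

theory Defs
  imports "HOL-Analysis.Analysis"
begin

fun iter_pd :: "('a::real_normed_vector) list \<Rightarrow> ('a \<Rightarrow> real) \<Rightarrow> 'a \<Rightarrow> real" where
  "iter_pd [] f = f"
| "iter_pd (v # vs) f = (\<lambda>x. deriv (\<lambda>t. iter_pd vs f (x + t *\<^sub>R v)) 0)"

definition smooth_on :: "('a::euclidean_space) set \<Rightarrow> ('a \<Rightarrow> real) \<Rightarrow> bool" where
  "smooth_on S f \<longleftrightarrow>
     (\<forall>vs. set vs \<subseteq> Basis \<longrightarrow>
        continuous_on S (iter_pd vs f) \<and>
        (\<forall>x\<in>S. \<forall>v\<in>Basis. (\<lambda>t. iter_pd vs f (x + t *\<^sub>R v)) differentiable (at 0)))"

definition kappa :: "real \<Rightarrow> nat \<Rightarrow> real" where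
  "kappa D n = 1 + 4 * pi\<^sup>2 * (real n)\<^sup>2 * D"

definition stationary_solution :: "real \<Rightarrow> real \<Rightarrow> (real \<Rightarrow> real) \<Rightarrow> bool" where
  "stationary_solution D k U \<longleftrightarrow>
     (\<forall>x. U (x + 1) = U x) \<and>
     (\<forall>x. D * deriv (deriv U) x - U x + k * exp (U x) / integral {0..1} (\<lambda>y. exp (U y)) = 0)"

definition branch_U :: "real \<Rightarrow> nat \<Rightarrow> (real \<Rightarrow> real) \<Rightarrow> (real \<Rightarrow> real \<Rightarrow> real) \<Rightarrow> real \<Rightarrow> real \<Rightarrow> real" where
  "branch_U D n \<alpha> z s x = kappa D n + \<alpha> s + s * sqrt 2 * cos (2 * real n * pi * x) + s * z s x"

definition subcritical :: "real \<Rightarrow> nat \<Rightarrow> (real \<Rightarrow> real) \<Rightarrow> bool" where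
  "subcritical D n \<alpha> \<longleftrightarrow> (\<exists>\<epsilon>>0. \<forall>s. 0 < \<bar>s\<bar> \<and> \<bar>s\<bar> < \<epsilon> \<longrightarrow> kappa D n + \<alpha> s < kappa D n)"

definition supercritical :: "real \<Rightarrow> nat \<Rightarrow> (real \<Rightarrow> real) \<Rightarrow> bool" where
  "supercritical D n \<alpha> \<longleftrightarrow> (\<exists>\<epsilon>>0. \<forall>s. 0 < \<bar>s\<bar> \<and> \<bar>s\<bar> < \<epsilon> \<longrightarrow> kappa D n + \<alpha> s > kappa D n)"

end

theory Submission
  imports Defs "HOL-Analysis.Analysis"
begin

lemma deriv_shift0: "deriv (\<lambda>t. g (x + t)) 0 = deriv g x"
proof -
  have "\<And>y. ((\<lambda>t. g (x + t)) has_field_derivative y) (at 0) \<longleftrightarrow> (g has_field_derivative y) (at x)"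
    using DERIV_shift[of g _ 0 x] by (simp add: add.commute)
  then show ?thesis by (simp add: deriv_def)
qed

lemma diff_shift0: "(\<lambda>t. g (x + t)) differentiable (at 0) \<Longrightarrow> (g::real\<Rightarrow>real) differentiable (at x)"
proof -
  assume "(\<lambda>t. g (x + t)) differentiable (at 0)"
  then obtain y where "((\<lambda>t. g (x + t)) has_real_derivative y) (at 0)" by (auto simp: real_differentiable_def)
  then have "(g has_real_derivative y) (at x)"
    using DERIV_shift[of g y 0 x] by (simp add: add.commute)
  then show ?thesis by (auto simp: real_differentiable_def)
qed

lemma deriv_periodic:
  assumes "\<forall>x. g (x + 1) = g x"
  shows "deriv g (x + 1) = deriv g x"
proof -
  have e: "(\<lambda>y. g (y + 1)) = g" using assms by auto
  have "\<And>d. (g has_field_derivative d) (at (x + 1)) \<longleftrightarrow> (g has_field_derivative d) (at x)"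
    using DERIV_shift[of g _ x 1] by (simp add: e)
  then show ?thesis by (simp add: deriv_def)
qed

lemma int_cos:
  assumes "m \<ge> 1"
  shows "((\<lambda>x. cos (2 * real m * pi * x)) has_integral 0) {0..1}"
proof -
  have mp: "2 * real m * pi \<noteq> 0" using assms by auto
  have "((\<lambda>x. cos (2 * real m * pi * x)) has_integral
        (sin (2 * real m * pi * 1) / (2 * real m * pi) - sin (2 * real m * pi * 0) / (2 * real m * pi))) {0..1}"
  proof (rule fundamental_theorem_of_calculus)
    fix x :: real assume "x \<in> {0..1}"
    have "((\<lambda>x. sin (2 * real m * pi * x) / (2 * real m * pi)) has_real_derivative
          cos (2 * real m * pi * x) * (2 * real m * pi) / (2 * real m * pi)) (at x)"
      by (auto intro!: derivative_eq_intros)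
    then show "((\<lambda>x. sin (2 * real m * pi * x) / (2 * real m * pi)) has_vector_derivative
          cos (2 * real m * pi * x)) (at x within {0..1})"
      using mp by (auto simp: has_real_derivative_iff_has_vector_derivative[symmetric] intro: has_field_derivative_at_within)
  qed simp
  then show ?thesis by simp
qed

lemma int_one: "((\<lambda>x::real. 1::real) has_integral 1) {0..1::real}"
  using has_integral_const_real[of "1::real" 0 1] by simp

lemma exp_rem1: fixes y :: real shows "\<bar>exp y - 1\<bar> \<le> exp \<bar>y\<bar> * \<bar>y\<bar>"
proof -
  obtain t where t: "\<bar>t\<bar> \<le> \<bar>y\<bar>" "exp y = (\<Sum>m<1. y ^ m / fact m) + exp t / fact 1 * y ^ 1"
    using Maclaurin_exp_le[of y 1] by blast
  have "exp t \<le> exp \<bar>y\<bar>" using t(1) by simp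
  then show ?thesis using t(2) by (simp add: abs_mult mult_right_mono)
qed

lemma exp_rem2: fixes y :: real shows "\<bar>exp y - 1 - y\<bar> \<le> exp \<bar>y\<bar> * y\<^sup>2 / 2"
proof -
  obtain t where t: "\<bar>t\<bar> \<le> \<bar>y\<bar>" "exp y = (\<Sum>m<2. y ^ m / fact m) + exp t / fact 2 * y ^ 2"
    using Maclaurin_exp_le[of y 2] by blast
  have "exp t \<le> exp \<bar>y\<bar>" using t(1) by simp
  then have le: "exp t * y\<^sup>2 / 2 \<le> exp \<bar>y\<bar> * y\<^sup>2 / 2" by (simp add: mult_right_mono divide_right_mono)
  have eq: "exp y - 1 - y = exp t * y\<^sup>2 / 2" using t(2) by (simp add: eval_nat_numeral)
  have "\<bar>exp y - 1 - y\<bar> = \<bar>exp t * y\<^sup>2 / 2\<bar>" by (simp only: eq)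
  also have "\<dots> = exp t * y\<^sup>2 / 2" by simp
  also have "\<dots> \<le> exp \<bar>y\<bar> * y\<^sup>2 / 2" by (rule le)
  finally show ?thesis .
qed

lemma exp_rem3: fixes y :: real shows "\<bar>exp y - 1 - y - y\<^sup>2/2\<bar> \<le> exp \<bar>y\<bar> * \<bar>y\<bar>^3 / 6"
proof -
  obtain t where t: "\<bar>t\<bar> \<le> \<bar>y\<bar>" "exp y = (\<Sum>m<3. y ^ m / fact m) + exp t / fact 3 * y ^ 3"
    using Maclaurin_exp_le[of y 3] by blast
  have "exp t \<le> exp \<bar>y\<bar>" using t(1) by simp
  then have le: "exp t * \<bar>y\<bar>^3 / 6 \<le> exp \<bar>y\<bar> * \<bar>y\<bar>^3 / 6" by (simp add: mult_right_mono divide_right_mono)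
  have eq: "exp y - 1 - y - y\<^sup>2/2 = exp t * y^3 / 6" using t(2) by (simp add: eval_nat_numeral fact_numeral)
  have "\<bar>exp y - 1 - y - y\<^sup>2/2\<bar> = \<bar>exp t * y^3 / 6\<bar>" by (simp only: eq)
  also have "\<dots> = exp t * \<bar>y\<bar>^3 / 6" by (simp add: abs_mult power_abs)
  also have "\<dots> \<le> exp \<bar>y\<bar> * \<bar>y\<bar>^3 / 6" by (rule le)
  finally show ?thesis .
qed

lemma exp_rem4: fixes y :: real shows "\<bar>exp y - 1 - y - y\<^sup>2/2 - y^3/6\<bar> \<le> exp \<bar>y\<bar> * y^4 / 24"
proof -
  obtain t where t: "\<bar>t\<bar> \<le> \<bar>y\<bar>" "exp y = (\<Sum>m<4. y ^ m / fact m) + exp t / fact 4 * y ^ 4"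
    using Maclaurin_exp_le[of y 4] by blast
  have "exp t \<le> exp \<bar>y\<bar>" using t(1) by simp
  then have le: "exp t * y^4 / 24 \<le> exp \<bar>y\<bar> * y^4 / 24" by (simp add: mult_right_mono divide_right_mono)
  have eq: "exp y - 1 - y - y\<^sup>2/2 - y^3/6 = exp t * y^4 / 24" using t(2) by (simp add: eval_nat_numeral fact_numeral)
  have "\<bar>exp y - 1 - y - y\<^sup>2/2 - y^3/6\<bar> = \<bar>exp t * y^4 / 24\<bar>" by (simp only: eq)
  also have "\<dots> = exp t * y^4 / 24" by (simp add: abs_mult)
  also have "\<dots> \<le> exp \<bar>y\<bar> * y^4 / 24" by (rule le)
  finally show ?thesis .
qed

lemma dom_conv_at0:
  fixes H :: "real \<Rightarrow> real \<Rightarrow> real" and H0 :: "real \<Rightarrow> real"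
  assumes ev: "eventually (\<lambda>s. (H s) integrable_on {0..1} \<and> (\<forall>x\<in>{0..1}. \<bar>H s x\<bar> \<le> B)) (at 0)"
    and lim: "\<And>x. x \<in> {0..1} \<Longrightarrow> ((\<lambda>s. H s x) \<longlongrightarrow> H0 x) (at 0)"
  shows "((\<lambda>s. integral {0..1} (H s)) \<longlongrightarrow> integral {0..1} H0) (at 0)"
proof -
  define P where "P s \<longleftrightarrow> (H s) integrable_on {0..1} \<and> (\<forall>x\<in>{0..1}. \<bar>H s x\<bar> \<le> B)" for s
  have hint: "(\<lambda>x::real. \<bar>B\<bar>) integrable_on {0..1}"
    using has_integral_const_real[of "\<bar>B\<bar>" 0 1] by (auto simp: integrable_on_def)
  { fix X :: "nat \<Rightarrow> real" assume X: "\<forall>i. X i \<in> UNIV - {0}" "X \<longlonglongrightarrow> 0"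
    have Xf: "filterlim X (at 0) sequentially" using X by (auto simp: filterlim_at)
    have evP: "eventually (\<lambda>k. P (X k)) sequentially"
      using eventually_compose_filterlim[OF ev[folded P_def] Xf] .
    define F where "F k = (if P (X k) then H (X k) else (\<lambda>x. 0))" for k
    have dc: "(\<lambda>k. integral {0..1} (F k)) \<longlonglongrightarrow> integral {0..1} H0"
    proof (rule dominated_convergence(2)[where h="\<lambda>x. \<bar>B\<bar>"])
      show "(F k) integrable_on {0..1}" for k by (auto simp: F_def P_def integrable_0)
      show "(\<lambda>x::real. \<bar>B\<bar>) integrable_on {0..1}" by (rule hint)
      show "norm (F k x) \<le> \<bar>B\<bar>" if "x \<in> {0..1}" for k x
        using that by (auto simp: F_def P_def intro: order_trans[OF _ abs_ge_self])
      show "(\<lambda>k. F k x) \<longlonglongrightarrow> H0 x" if x: "x \<in> {0..1}" for x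
      proof -
        have "(\<lambda>k. H (X k) x) \<longlonglongrightarrow> H0 x"
          using filterlim_compose[OF lim[OF x] Xf] .
        moreover have "eventually (\<lambda>k. H (X k) x = F k x) sequentially"
          using evP by eventually_elim (simp add: F_def)
        ultimately show ?thesis by (rule Lim_transform_eventually)
      qed
    qed
    moreover have "eventually (\<lambda>k. integral {0..1} (F k) = integral {0..1} (H (X k))) sequentially"
      using evP by eventually_elim (simp add: F_def)
    ultimately have "((\<lambda>s. integral {0..1} (H s)) \<circ> X) \<longlonglongrightarrow> integral {0..1} H0"
      unfolding comp_def by (rule Lim_transform_eventually)
  }
  then show ?thesis by (subst tendsto_at_iff_sequentially) blast
qed

lemma test_identity:
  fixes U U1 U2 g g1 :: "real \<Rightarrow> real"
  assumes dU: "\<And>x. (U has_real_derivative U1 x) (at x)"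
    and dU1: "\<And>x. (U1 has_real_derivative U2 x) (at x)"
    and pU: "U 1 = U 0" and pU1: "U1 1 = U1 0"
    and dg: "\<And>x. (g has_real_derivative g1 x) (at x)"
    and dg1: "\<And>x. (g1 has_real_derivative (- c * g x)) (at x)"
    and pg: "g 1 = g 0" and pg1: "g1 1 = g1 0"
    and eq: "\<And>x. D * U2 x - U x + k * exp (U x) / I = 0"
  shows "((\<lambda>x. (1 + c * D) * g x * U x - k * g x * exp (U x) / I) has_integral 0) {0..1}"
proof -
  define G where "G x = g x * U1 x - g1 x * U x" for x
  have "((\<lambda>x. g x * U2 x + c * g x * U x) has_integral (G 1 - G 0)) {0..1}"
  proof (rule fundamental_theorem_of_calculus)
    fix x :: real assume "x \<in> {0..1}"
    have "(G has_real_derivative (g1 x * U1 x + g x * U2 x - (- c * g x * U x + g1 x * U1 x))) (at x)"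
      unfolding G_def by (auto intro!: derivative_eq_intros dU dU1 dg dg1)
    then have "(G has_real_derivative (g x * U2 x + c * g x * U x)) (at x)"
      by (simp add: algebra_simps)
    then show "(G has_vector_derivative (g x * U2 x + c * g x * U x)) (at x within {0..1})"
      by (auto simp: has_real_derivative_iff_has_vector_derivative[symmetric] intro: has_field_derivative_at_within)
  qed simp
  moreover have "G 1 - G 0 = 0" by (simp add: G_def pU pU1 pg pg1)
  ultimately have "((\<lambda>x. g x * U2 x + c * g x * U x) has_integral 0) {0..1}" by simp
  then have "((\<lambda>x. D * (g x * U2 x + c * g x * U x)) has_integral D * 0) {0..1}"
    by (rule has_integral_mult_right)
  moreover have "D * (g x * U2 x + c * g x * U x) = (1 + c * D) * g x * U x - k * g x * exp (U x) / I" for x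
  proof -
    have "D * U2 x = U x - k * exp (U x) / I" using eq[of x] by simp
    then have "D * (g x * U2 x + c * g x * U x) = g x * (U x - k * exp (U x) / I) + c * D * g x * U x"
      by (metis (no_types, lifting) distrib_left mult.assoc mult.left_commute)
    then show ?thesis by (simp add: algebra_simps)
  qed
  ultimately show ?thesis by simp
qed

lemma integral_pos_cont:
  fixes h :: "real \<Rightarrow> real"
  assumes "continuous_on {0..1} h" "\<And>x. x \<in> {0..1} \<Longrightarrow> h x > 0"
  shows "integral {0..1} h > 0"
proof -
  obtain x0 where x0: "x0 \<in> {0..1}" "\<And>y. y \<in> {0..1} \<Longrightarrow> h x0 \<le> h y"
    using continuous_attains_inf[OF compact_Icc _ assms(1)] by fastforce
  have "integral {0..1} (\<lambda>x::real. h x0) \<le> integral {0..1} h"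
    by (rule integral_le) (auto intro: integrable_continuous_interval assms(1) x0(2))
  moreover have "integral {0..1} (\<lambda>x::real. h x0) = h x0" by simp
  ultimately show ?thesis using assms(2)[OF x0(1)] by simp
qed

locale bif =
  fixes D \<delta> :: real and n :: nat and \<alpha> :: "real \<Rightarrow> real" and z :: "real \<Rightarrow> real \<Rightarrow> real"
  assumes D_pos: "D > 0" and n_pos: "n \<ge> 1" and \<delta>_pos: "\<delta> > 0"
    and \<alpha>_smooth: "smooth_on {-\<delta><..<\<delta>} \<alpha>"
    and \<alpha>0: "\<alpha> 0 = 0" and d\<alpha>0: "deriv \<alpha> 0 = 0"
    and z_smooth: "smooth_on ({-\<delta><..<\<delta>} \<times> UNIV) (\<lambda>(s, x). z s x)"
    and z0: "\<forall>x. z 0 x = 0"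
    and sol: "\<forall>s. \<bar>s\<bar> < \<delta> \<longrightarrow>
               stationary_solution D (kappa D n + \<alpha> s) (branch_U D n \<alpha> z s)"
begin

definition zx :: "real \<Rightarrow> real \<Rightarrow> real" where
  "zx s x = iter_pd [(0,1)] (\<lambda>(s, x). z s x) (s, x)"
definition zs :: "real \<Rightarrow> real \<Rightarrow> real" where
  "zs s x = iter_pd [(1,0)] (\<lambda>(s, x). z s x) (s, x)"

lemma basis01: "((0::real), (1::real)) \<in> Basis" and basis10: "((1::real), (0::real)) \<in> Basis"
  by (auto simp: Basis_prod_def)

lemma z_cont: "continuous_on ({-\<delta><..<\<delta>} \<times> UNIV) (\<lambda>(s, x). z s x)"
  using z_smooth unfolding smooth_on_def by (metis empty_subsetI iter_pd.simps(1) list.set(1))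

lemma zs_cont: "continuous_on ({-\<delta><..<\<delta>} \<times> UNIV) (\<lambda>(s, x). zs s x)"
proof -
  have "set [((1::real), (0::real))] \<subseteq> Basis" using basis10 by simp
  then have "continuous_on ({-\<delta><..<\<delta>} \<times> UNIV) (iter_pd [(1,0)] (\<lambda>(s, x). z s x))"
    using z_smooth unfolding smooth_on_def by blast
  moreover have "(\<lambda>(s, x). zs s x) = iter_pd [(1,0)] (\<lambda>(s, x). z s x)"
    by (auto simp: zs_def)
  ultimately show ?thesis by simp
qed

lemma z_dx:
  assumes "\<bar>s\<bar> < \<delta>"
  shows "(z s has_real_derivative zx s x) (at x)"
proof -
  have mem: "(s, x) \<in> {-\<delta><..<\<delta>} \<times> UNIV" using assms by auto
  have "(\<lambda>t. iter_pd [] (\<lambda>(s, x). z s x) ((s, x) + t *\<^sub>R (0,1))) differentiable (at 0)"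
    using z_smooth mem basis01 unfolding smooth_on_def by (metis empty_subsetI list.set(1))
  then have "(\<lambda>t. z s (x + t)) differentiable (at 0)" by simp
  then have "z s differentiable (at x)" by (rule diff_shift0)
  then have "(z s has_real_derivative deriv (z s) x) (at x)"
    by (simp add: DERIV_deriv_iff_real_differentiable)
  moreover have "zx s x = deriv (z s) x"
    by (simp add: zx_def deriv_shift0)
  ultimately show ?thesis by simp
qed

lemma zx_diff:
  assumes "\<bar>s\<bar> < \<delta>"
  shows "(zx s) differentiable (at x)"
proof -
  have mem: "(s, x) \<in> {-\<delta><..<\<delta>} \<times> UNIV" using assms by auto
  have "set [((0::real), (1::real))] \<subseteq> Basis" using basis01 by simp
  then have "(\<lambda>t. iter_pd [(0,1)] (\<lambda>(s, x). z s x) ((s, x) + t *\<^sub>R (0,1))) differentiable (at 0)"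
    using z_smooth mem basis01 unfolding smooth_on_def by blast
  then have "(\<lambda>t. zx s (x + t)) differentiable (at 0)" by (simp add: zx_def)
  then show ?thesis by (rule diff_shift0)
qed

lemma z_ds:
  assumes "\<bar>s\<bar> < \<delta>"
  shows "((\<lambda>\<sigma>. z \<sigma> x) has_real_derivative zs s x) (at s)"
proof -
  have mem: "(s, x) \<in> {-\<delta><..<\<delta>} \<times> UNIV" using assms by auto
  have "(\<lambda>t. iter_pd [] (\<lambda>(s, x). z s x) ((s, x) + t *\<^sub>R (1,0))) differentiable (at 0)"
    using z_smooth mem basis10 unfolding smooth_on_def by (metis empty_subsetI list.set(1))
  then have "(\<lambda>t. z (s + t) x) differentiable (at 0)" by simp
  then have "(\<lambda>\<sigma>. z \<sigma> x) differentiable (at s)" by (rule diff_shift0[where g="\<lambda>\<sigma>. z \<sigma> x"])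
  then have "((\<lambda>\<sigma>. z \<sigma> x) has_real_derivative deriv (\<lambda>\<sigma>. z \<sigma> x) s) (at s)"
    by (simp add: DERIV_deriv_iff_real_differentiable)
  moreover have "zs s x = deriv (\<lambda>\<sigma>. z \<sigma> x) s"
    using deriv_shift0[of "\<lambda>\<sigma>. z \<sigma> x" s] by (simp add: zs_def)
  ultimately show ?thesis by simp
qed

lemma iter1_real: "iter_pd [1] f = deriv (f::real\<Rightarrow>real)"
  by (auto simp: deriv_shift0)

lemma \<alpha>_d:
  assumes "\<bar>x\<bar> < \<delta>"
  shows "(\<alpha> has_real_derivative deriv \<alpha> x) (at x)"
proof -
  have mem: "x \<in> {-\<delta><..<\<delta>}" using assms by auto
  have "(\<lambda>t. iter_pd [] \<alpha> (x + t *\<^sub>R 1)) differentiable (at 0)"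
    using \<alpha>_smooth mem unfolding smooth_on_def by (metis Basis_real_def empty_subsetI insertI1 list.set(1))
  then have "(\<lambda>t. \<alpha> (x + t)) differentiable (at 0)" by simp
  then have "\<alpha> differentiable (at x)" by (rule diff_shift0)
  then show ?thesis by (simp add: DERIV_deriv_iff_real_differentiable)
qed

lemma d\<alpha>_d: "(deriv \<alpha> has_real_derivative deriv (deriv \<alpha>) 0) (at 0)"
proof -
  have mem: "0 \<in> {-\<delta><..<\<delta>}" using \<delta>_pos by auto
  have "set [1::real] \<subseteq> Basis" by (simp add: Basis_real_def)
  then have "(\<lambda>t. iter_pd [1] \<alpha> (0 + t *\<^sub>R 1)) differentiable (at 0)"
    using \<alpha>_smooth mem unfolding smooth_on_def by (metis Basis_real_def insertI1)
  moreover have "(\<lambda>t. iter_pd [1] \<alpha> (0 + t *\<^sub>R 1)) = deriv \<alpha>"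
    by (rule ext) (simp only: iter1_real, simp)
  ultimately have "deriv \<alpha> differentiable (at 0)" by simp
  then show ?thesis by (simp add: DERIV_deriv_iff_real_differentiable)
qed

end

context bif begin

definition phi :: "real \<Rightarrow> real" where "phi x = sqrt 2 * cos (2 * real n * pi * x)"
definition psi :: "real \<Rightarrow> real" where "psi x = cos (2 * real (2 * n) * pi * x)"
definition lam :: "real \<Rightarrow> real" where "lam s = kappa D n + \<alpha> s"
definition Z :: "real \<Rightarrow> real \<Rightarrow> real" where "Z s x = phi x + z s x"
definition M :: "real \<Rightarrow> real" where "M s = integral {0..1} (\<lambda>x. exp (s * Z s x))"
definition U1 :: "real \<Rightarrow> real \<Rightarrow> real" where
  "U1 s x = s * sqrt 2 * (- sin (2 * real n * pi * x) * (2 * real n * pi)) + s * zx s x"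

lemma U_eq: "branch_U D n \<alpha> z s x = lam s + s * Z s x"
  by (simp add: branch_U_def lam_def Z_def phi_def algebra_simps)

lemma z_cont_x: "\<bar>s\<bar> < \<delta> \<Longrightarrow> continuous_on A (z s)"
  by (meson DERIV_isCont continuous_at_imp_continuous_on z_dx)

lemma Z_cont: "\<bar>s\<bar> < \<delta> \<Longrightarrow> continuous_on A (Z s)"
  unfolding Z_def[abs_def] phi_def
  by (intro continuous_on_add continuous_intros z_cont_x)

lemma M_pos: "\<bar>s\<bar> < \<delta> \<Longrightarrow> M s > 0"
  unfolding M_def
  by (rule integral_pos_cont) (auto intro!: continuous_intros Z_cont)

lemma U_derivs:
  assumes s: "\<bar>s\<bar> < \<delta>"
  shows "\<And>x. (branch_U D n \<alpha> z s has_real_derivative U1 s x) (at x)"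
    and "\<And>x. (U1 s has_real_derivative deriv (U1 s) x) (at x)"
    and "branch_U D n \<alpha> z s 1 = branch_U D n \<alpha> z s 0"
    and "U1 s 1 = U1 s 0"
    and "\<And>x. D * deriv (U1 s) x - branch_U D n \<alpha> z s x
            + lam s * exp (branch_U D n \<alpha> z s x) / integral {0..1} (\<lambda>y. exp (branch_U D n \<alpha> z s y)) = 0"
proof -
  have ss: "stationary_solution D (lam s) (branch_U D n \<alpha> z s)"
    using sol s by (simp add: lam_def)
  have bU: "branch_U D n \<alpha> z s = (\<lambda>x. kappa D n + \<alpha> s + s * sqrt 2 * cos (2 * real n * pi * x) + s * z s x)"
    by (rule ext) (simp add: branch_U_def)
  show d1: "(branch_U D n \<alpha> z s has_real_derivative U1 s x) (at x)" for x
    unfolding bU U1_def by (auto intro!: derivative_eq_intros z_dx[OF s])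
  have dU: "deriv (branch_U D n \<alpha> z s) = U1 s"
    using d1 by (auto intro!: DERIV_imp_deriv)
  show "(U1 s has_real_derivative deriv (U1 s) x) (at x)" for x
  proof -
    have zd: "(zx s has_real_derivative deriv (zx s) x) (at x)"
      using zx_diff[OF s] by (simp add: DERIV_deriv_iff_real_differentiable)
    have "\<exists>d. (U1 s has_real_derivative d) (at x)"
      unfolding U1_def[abs_def] by (rule exI) (auto intro!: derivative_eq_intros zd)
    then show ?thesis by (simp add: DERIV_deriv_iff_real_differentiable real_differentiable_def)
  qed
  have per: "\<forall>x. branch_U D n \<alpha> z s (x + 1) = branch_U D n \<alpha> z s x"
    using ss by (simp add: stationary_solution_def)
  show "branch_U D n \<alpha> z s 1 = branch_U D n \<alpha> z s 0" using per[rule_format, of 0] by simp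
  show "U1 s 1 = U1 s 0" using deriv_periodic[OF per, of 0] by (simp add: dU)
  show "D * deriv (U1 s) x - branch_U D n \<alpha> z s x
            + lam s * exp (branch_U D n \<alpha> z s x) / integral {0..1} (\<lambda>y. exp (branch_U D n \<alpha> z s y)) = 0" for x
    using ss by (simp add: stationary_solution_def dU)
qed

end

context bif begin

lemma per_s:
  fixes g gd :: "real \<Rightarrow> real" and c :: real
  assumes s: "\<bar>s\<bar> < \<delta>"
    and dg: "\<And>x. (g has_real_derivative gd x) (at x)"
    and dg1: "\<And>x. (gd has_real_derivative (- c * g x)) (at x)"
    and pg: "g 1 = g 0" and pg1: "gd 1 = gd 0"
  shows "(1 + c * D) * lam s * integral {0..1} g + (1 + c * D) * s * integral {0..1} (\<lambda>x. g x * Z s x)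
         - lam s / M s * integral {0..1} (\<lambda>x. g x * exp (s * Z s x)) = 0"
proof -
  let ?U = "branch_U D n \<alpha> z s"
  have ti: "((\<lambda>x. (1 + c * D) * g x * ?U x - lam s * g x * exp (?U x) / integral {0..1} (\<lambda>y. exp (?U y))) has_integral 0) {0..1}"
    by (rule test_identity[OF U_derivs(1,2,3,4)[OF s] dg dg1 pg pg1 U_derivs(5)[OF s]])
  have I: "integral {0..1} (\<lambda>y. exp (?U y)) = exp (lam s) * M s"
    by (simp add: U_eq exp_add M_def)
  have Mp: "M s > 0" by (rule M_pos[OF s])
  have pt: "(1 + c * D) * g x * ?U x - lam s * g x * exp (?U x) / integral {0..1} (\<lambda>y. exp (?U y))
      = (1 + c * D) * lam s * g x + (1 + c * D) * s * (g x * Z s x) - lam s / M s * (g x * exp (s * Z s x))" for x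
  proof -
    have I2: "integral {0..1} (\<lambda>y. exp (lam s + s * Z s y)) = exp (lam s) * M s"
      by (simp add: exp_add M_def)
    show ?thesis
      apply (simp only: U_eq I2)
      using Mp by (simp add: exp_add field_simps)
  qed
  have gc: "continuous_on {0..1} g"
    by (meson DERIV_isCont continuous_at_imp_continuous_on dg)
  have i1: "(g has_integral integral {0..1} g) {0..1}"
    by (intro integrable_integral integrable_continuous_interval gc)
  have i2: "((\<lambda>x. g x * Z s x) has_integral integral {0..1} (\<lambda>x. g x * Z s x)) {0..1}"
    by (intro integrable_integral integrable_continuous_interval continuous_intros gc Z_cont[OF s])
  have i3: "((\<lambda>x. g x * exp (s * Z s x)) has_integral integral {0..1} (\<lambda>x. g x * exp (s * Z s x))) {0..1}"
    by (intro integrable_integral integrable_continuous_interval continuous_intros gc Z_cont[OF s])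
  have "((\<lambda>x. (1 + c * D) * lam s * g x + (1 + c * D) * s * (g x * Z s x) - lam s / M s * (g x * exp (s * Z s x)))
        has_integral ((1 + c * D) * lam s * integral {0..1} g + (1 + c * D) * s * integral {0..1} (\<lambda>x. g x * Z s x)
         - lam s / M s * integral {0..1} (\<lambda>x. g x * exp (s * Z s x)))) {0..1}"
    by (intro has_integral_diff has_integral_add has_integral_mult_right i1 i2 i3)
  moreover have "((\<lambda>x. (1 + c * D) * lam s * g x + (1 + c * D) * s * (g x * Z s x) - lam s / M s * (g x * exp (s * Z s x)))
        has_integral 0) {0..1}"
    using ti by (simp only: pt)
  ultimately show ?thesis by (rule has_integral_unique)
qed

lemma int_phi: "integral {0..1} phi = 0"
  using int_cos[OF n_pos] by (simp add: phi_def[abs_def] integral_unique)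

lemma int_psi: "integral {0..1} psi = 0"
  using int_cos[of "2*n"] n_pos by (simp add: psi_def[abs_def] integral_unique)

lemma eq_one:
  assumes s: "\<bar>s\<bar> < \<delta>"
  shows "integral {0..1} (Z s) = 0 \<or> s = 0"
proof -
  have "s * integral {0..1} (Z s) = 0"
    using per_s[OF s, of "\<lambda>x. 1" "\<lambda>x. 0" 0] M_pos[OF s] by (simp add: M_def[symmetric])
  then show ?thesis by auto
qed

lemma eq_phi:
  assumes s: "\<bar>s\<bar> < \<delta>"
  shows "kappa D n * s * integral {0..1} (\<lambda>x. phi x * Z s x)
         - lam s / M s * integral {0..1} (\<lambda>x. phi x * exp (s * Z s x)) = 0"
proof -
  have "(1 + (2 * real n * pi)^2 * D) * lam s * integral {0..1} phi + (1 + (2 * real n * pi)^2 * D) * s * integral {0..1} (\<lambda>x. phi x * Z s x)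
         - lam s / M s * integral {0..1} (\<lambda>x. phi x * exp (s * Z s x)) = 0"
  proof (rule per_s[OF s, where gd="\<lambda>x. sqrt 2 * (- sin (2 * real n * pi * x) * (2 * real n * pi))"])
    show "(phi has_real_derivative sqrt 2 * (- sin (2 * real n * pi * x) * (2 * real n * pi))) (at x)" for x
      unfolding phi_def[abs_def] by (auto intro!: derivative_eq_intros)
    show "((\<lambda>x. sqrt 2 * (- sin (2 * real n * pi * x) * (2 * real n * pi))) has_real_derivative - (2 * real n * pi)\<^sup>2 * phi x) (at x)" for x
      unfolding phi_def by (auto intro!: derivative_eq_intros simp: power2_eq_square)
    show "phi 1 = phi 0" by (simp add: phi_def)
    show "sqrt 2 * (- sin (2 * real n * pi * 1) * (2 * real n * pi)) = sqrt 2 * (- sin (2 * real n * pi * 0) * (2 * real n * pi))"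
      by simp
  qed
  moreover have "1 + (2 * real n * pi)^2 * D = kappa D n" by (simp add: kappa_def power2_eq_square)
  ultimately show ?thesis by (simp add: int_phi)
qed

lemma eq_psi:
  assumes s: "\<bar>s\<bar> < \<delta>"
  shows "(1 + 16 * pi\<^sup>2 * (real n)\<^sup>2 * D) * s * integral {0..1} (\<lambda>x. psi x * Z s x)
         - lam s / M s * integral {0..1} (\<lambda>x. psi x * exp (s * Z s x)) = 0"
proof -
  have "(1 + (2 * real (2*n) * pi)^2 * D) * lam s * integral {0..1} psi + (1 + (2 * real (2*n) * pi)^2 * D) * s * integral {0..1} (\<lambda>x. psi x * Z s x)
         - lam s / M s * integral {0..1} (\<lambda>x. psi x * exp (s * Z s x)) = 0"
  proof (rule per_s[OF s, where gd="\<lambda>x. - sin (2 * real (2*n) * pi * x) * (2 * real (2*n) * pi)"])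
    show "(psi has_real_derivative - sin (2 * real (2*n) * pi * x) * (2 * real (2*n) * pi)) (at x)" for x
      unfolding psi_def[abs_def] by (auto intro!: derivative_eq_intros)
    show "((\<lambda>x. - sin (2 * real (2*n) * pi * x) * (2 * real (2*n) * pi)) has_real_derivative - (2 * real (2*n) * pi)\<^sup>2 * psi x) (at x)" for x
      unfolding psi_def by (auto intro!: derivative_eq_intros simp: power2_eq_square)
    show "psi 1 = psi 0" unfolding psi_def by (simp only: mult_1_right mult_zero_right cos_zero cos_2npi)
    show "- sin (2 * real (2*n) * pi * 1) * (2 * real (2*n) * pi) = - sin (2 * real (2*n) * pi * 0) * (2 * real (2*n) * pi)"
      by (simp del: of_nat_mult)
  qed
  moreover have "(4 * real n * pi)\<^sup>2 = 16 * pi\<^sup>2 * (real n)\<^sup>2" by (simp add: power_mult_distrib)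
  ultimately show ?thesis by (simp add: int_psi)
qed

end

context bif begin

lemma phi_sq: "(phi x)\<^sup>2 = 1 + psi x"
proof -
  have a: "2 * real (2 * n) * pi * x = 2 * (2 * real n * pi * x)" by simp
  show ?thesis unfolding phi_def psi_def a cos_double_cos
    by (simp add: power_mult_distrib)
qed

lemma phi_psi: "phi x * psi x = sqrt 2 / 2 * (cos (2 * real (3 * n) * pi * x) + cos (2 * real n * pi * x))"
proof -
  define t where "t = 2 * real n * pi * x"
  have a: "2 * real (2 * n) * pi * x = 2 * t" by (simp add: t_def)
  have b: "2 * real (3 * n) * pi * x = t + 2 * t" by (simp add: t_def)
  have c: "cos t * cos (2 * t) = (cos (t - 2 * t) + cos (t + 2 * t)) / 2"
    by (rule cos_times_cos)
  have d: "cos (t - 2 * t) = cos t" by simp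
  show ?thesis unfolding phi_def psi_def a b t_def[symmetric] using c d by simp
qed

lemma psi_sq: "(psi x)\<^sup>2 = (1 + cos (2 * real (4 * n) * pi * x)) / 2"
proof -
  define t where "t = 2 * real (2 * n) * pi * x"
  have b: "2 * real (4 * n) * pi * x = 2 * t" by (simp add: t_def)
  have "cos (2 * t) = 2 * (cos t)\<^sup>2 - 1" by (rule cos_double_cos)
  then show ?thesis unfolding psi_def b t_def[symmetric] by simp
qed
lemma icos: "k \<ge> 1 \<Longrightarrow> integral {0..1} (\<lambda>x. cos (2 * real (k * n) * pi * x)) = 0"
  using int_cos[of "k * n"] n_pos by (simp add: integral_unique del: of_nat_mult)

lemma const_int: "(\<lambda>x::real. c::real) integrable_on {0..1}"
  using has_integral_const_real[of c 0 1] by (auto simp: integrable_on_def)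

lemma icos_int: "(\<lambda>x. cos (2 * real m * pi * x)) integrable_on {0..1}"
  by (intro integrable_continuous_interval continuous_intros)

lemma phi_int: "phi integrable_on {0..1}" and psi_int: "psi integrable_on {0..1}"
  unfolding phi_def[abs_def] psi_def[abs_def]
  by (intro integrable_continuous_interval continuous_intros)+

lemma int_phi_psi: "integral {0..1} (\<lambda>x. phi x * psi x) = 0"
proof -
  have "integral {0..1} (\<lambda>x. phi x * psi x) = sqrt 2 / 2 * (integral {0..1} (\<lambda>x. cos (2 * real (3 * n) * pi * x)) + integral {0..1} (\<lambda>x. cos (2 * real (1 * n) * pi * x)))"
    unfolding phi_psi by (simp add: integral_add icos_int del: of_nat_mult)
  also have "\<dots> = 0" using icos[of 3] icos[of 1] by simp
  finally show ?thesis .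
qed

lemma int_phi2: "integral {0..1} (\<lambda>x. phi x * phi x) = 1"
proof -
  have "integral {0..1} (\<lambda>x. phi x * phi x) = integral {0..1} (\<lambda>x. 1 + psi x)"
    by (metis phi_sq power2_eq_square)
  also have "\<dots> = 1" by (simp add: integral_add psi_int int_psi const_int)
  finally show ?thesis .
qed

lemma int_phi3: "integral {0..1} (\<lambda>x. phi x * (phi x)^3) = 3/2"
  and int_phi_cube: "integral {0..1} (\<lambda>x. (phi x)^3) = 0"
  and int_psi_phi2: "integral {0..1} (\<lambda>x. psi x * (phi x)\<^sup>2) = 1/2"
proof -
  have c4: "(\<lambda>x. cos (2 * real (4 * n) * pi * x)) integrable_on {0..1}" by (rule icos_int)
  have e1: "phi x * (phi x)^3 = 1 + 2 * psi x + (1 + cos (2 * real (4 * n) * pi * x)) / 2" for x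
  proof -
    have "phi x * (phi x)^3 = ((phi x)\<^sup>2)\<^sup>2" by (simp add: eval_nat_numeral)
    also have "\<dots> = 1 + 2 * psi x + (psi x)\<^sup>2" unfolding phi_sq by (simp add: power2_eq_square algebra_simps)
    finally show ?thesis unfolding psi_sq .
  qed
  have "integral {0..1} (\<lambda>x. phi x * (phi x)^3)
      = integral {0..1} (\<lambda>x. 1 + 2 * psi x + (1/2 + cos (2 * real (4 * n) * pi * x) / 2))"
    unfolding e1 by (simp add: add_divide_distrib)
  also have "\<dots> = 1 + 2 * integral {0..1} psi + (1/2 + integral {0..1} (\<lambda>x. cos (2 * real (4 * n) * pi * x)) / 2)"
    by (simp add: integral_add psi_int c4 integrable_add const_int integral_divide del: of_nat_mult)
  also have "\<dots> = 3/2" using icos[of 4] int_psi by simp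
  finally show "integral {0..1} (\<lambda>x. phi x * (phi x)^3) = 3/2" .
  have e3: "(phi x)^3 = phi x + phi x * psi x" for x
  proof -
    have "(phi x)^3 = phi x * (phi x)\<^sup>2" by (simp add: eval_nat_numeral)
    then show ?thesis unfolding phi_sq by (simp add: algebra_simps)
  qed
  have ppi: "(\<lambda>x. phi x * psi x) integrable_on {0..1}"
    unfolding phi_def[abs_def] psi_def[abs_def]
    by (intro integrable_continuous_interval continuous_intros)
  show "integral {0..1} (\<lambda>x. (phi x)^3) = 0"
    unfolding e3 by (simp add: integral_add phi_int ppi int_phi int_phi_psi)
  have e2: "psi x * (phi x)\<^sup>2 = psi x + (1/2 + cos (2 * real (4 * n) * pi * x) / 2)" for x
    unfolding phi_sq by (simp add: algebra_simps power2_eq_square[symmetric] psi_sq add_divide_distrib)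
  show "integral {0..1} (\<lambda>x. psi x * (phi x)\<^sup>2) = 1/2"
    unfolding e2 using icos[of 4]
    by (simp add: integral_add psi_int c4 integrable_add const_int integral_divide int_psi del: of_nat_mult)
qed

end

lemma rem_div_bound:
  fixes R s w r B c :: real and k :: nat
  assumes R: "\<bar>R\<bar> \<le> exp \<bar>s*w\<bar> * \<bar>s*w\<bar>^k / c" and c: "c > 0" and s: "s \<noteq> 0"
    and sr: "\<bar>s\<bar> \<le> r" and wB: "\<bar>w\<bar> \<le> B"
  shows "\<bar>R / s^k\<bar> \<le> exp (r*B) * B^k / c"
proof -
  have sk: "\<bar>s\<bar>^k > 0" using s by simp
  have "\<bar>R / s^k\<bar> = \<bar>R\<bar> / \<bar>s\<bar>^k" by (simp add: power_abs)
  also have "\<dots> \<le> (exp \<bar>s*w\<bar> * \<bar>s*w\<bar>^k / c) / \<bar>s\<bar>^k"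
    using divide_right_mono[OF R less_imp_le[OF sk]] .
  also have "\<dots> = exp \<bar>s*w\<bar> * \<bar>w\<bar>^k / c"
    using sk by (simp add: abs_mult power_mult_distrib field_simps)
  also have "\<dots> \<le> exp (r*B) * B^k / c"
  proof -
    have "\<bar>s*w\<bar> \<le> r * B" unfolding abs_mult
      by (rule mult_mono[OF sr wB]) (use sr wB in auto)
    then have "exp \<bar>s*w\<bar> \<le> exp (r*B)" by simp
    moreover have "\<bar>w\<bar>^k \<le> B^k" by (rule power_mono[OF wB]) simp
    ultimately have "exp \<bar>s*w\<bar> * \<bar>w\<bar>^k \<le> exp (r*B) * B^k"
      by (rule mult_mono) auto
    then show ?thesis using c by (simp add: divide_right_mono)
  qed
  finally show ?thesis .
qed

lemma b2: fixes s w r B :: real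
  assumes "s \<noteq> 0" "\<bar>s\<bar> \<le> r" "\<bar>w\<bar> \<le> B"
  shows "\<bar>(exp (s*w) - 1 - s*w) / s^2\<bar> \<le> exp (r*B) * B^2 / 2"
  by (rule rem_div_bound[OF _ _ assms]) (use exp_rem2[of "s*w"] in auto)

lemma b3: fixes s w r B :: real
  assumes "s \<noteq> 0" "\<bar>s\<bar> \<le> r" "\<bar>w\<bar> \<le> B"
  shows "\<bar>(exp (s*w) - 1 - s*w - (s*w)^2/2) / s^3\<bar> \<le> exp (r*B) * B^3 / 6"
  by (rule rem_div_bound[OF _ _ assms]) (use exp_rem3[of "s*w"] in auto)

lemma b4: fixes s w r B :: real
  assumes "s \<noteq> 0" "\<bar>s\<bar> \<le> r" "\<bar>w\<bar> \<le> B"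
  shows "\<bar>(exp (s*w) - 1 - s*w - (s*w)^2/2 - (s*w)^3/6) / s^4\<bar> \<le> exp (r*B) * B^4 / 24"
proof (rule rem_div_bound[OF _ _ assms])
  show "\<bar>exp (s*w) - 1 - s*w - (s*w)^2/2 - (s*w)^3/6\<bar> \<le> exp \<bar>s * w\<bar> * \<bar>s * w\<bar> ^ 4 / 24"
    using exp_rem4[of "s*w"] by (simp add: power_abs[symmetric] del: power_abs)
qed simp

lemma id1: fixes s w :: real assumes "s \<noteq> 0"
  shows "(exp(s*w)-1-s*w)/s = s * ((exp(s*w)-1-s*w)/s^2)"
  using assms by (simp add: field_simps power2_eq_square)

lemma id2: fixes s w :: real assumes "s \<noteq> 0"
  shows "(exp(s*w)-1-s*w)/s^2 - w^2/2 = s * ((exp(s*w)-1-s*w-(s*w)^2/2)/s^3)"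
  using assms by (simp add: field_simps power2_eq_square power3_eq_cube)

lemma id3: fixes s w :: real assumes "s \<noteq> 0"
  shows "(exp(s*w)-1-s*w-(s*w)^2/2)/s^3 - w^3/6 = s * ((exp(s*w)-1-s*w-(s*w)^2/2-(s*w)^3/6)/s^4)"
  using assms by (simp add: field_simps eval_nat_numeral)

lemma approx_lim:
  fixes H G K :: "real \<Rightarrow> real"
  assumes "(G \<longlongrightarrow> L) F" "eventually (\<lambda>s. \<bar>H s - G s\<bar> \<le> K s) F" "(K \<longlongrightarrow> 0) F"
  shows "(H \<longlongrightarrow> L) F"
proof -
  have "((\<lambda>s. H s - G s) \<longlongrightarrow> 0) F"
    by (rule Lim_null_comparison[OF _ assms(3)]) (use assms(2) in simp)
  then have "((\<lambda>s. G s + (H s - G s)) \<longlongrightarrow> L + 0) F" by (intro tendsto_add assms(1))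
  then show ?thesis by simp
qed

lemma abs_mult_le: fixes a b A B :: real shows "\<bar>a\<bar> \<le> A \<Longrightarrow> \<bar>b\<bar> \<le> B \<Longrightarrow> \<bar>a*b\<bar> \<le> A*B"
  by (simp add: abs_mult mult_mono')

context bif begin

lemma lin_bound: "\<exists>C\<ge>0. \<forall>s x. \<bar>s\<bar> \<le> \<delta>/2 \<longrightarrow> x \<in> {0..1} \<longrightarrow> \<bar>z s x\<bar> \<le> C * \<bar>s\<bar>"
proof -
  let ?K = "{-\<delta>/2..\<delta>/2} \<times> {0..1::real}"
  have Ksub: "?K \<subseteq> {-\<delta><..<\<delta>} \<times> UNIV" using \<delta>_pos by auto
  have "compact ?K" by (intro compact_Times compact_Icc)
  moreover have "continuous_on ?K (\<lambda>(s, x). zs s x)" by (rule continuous_on_subset[OF zs_cont Ksub])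
  ultimately have "bounded ((\<lambda>(s, x). zs s x) ` ?K)" by (intro compact_imp_bounded compact_continuous_image)
  then obtain B where B: "\<And>p. p \<in> ?K \<Longrightarrow> \<bar>(\<lambda>(s, x). zs s x) p\<bar> \<le> B"
    unfolding bounded_iff by auto
  have Bs: "\<bar>zs s x\<bar> \<le> \<bar>B\<bar>" if "\<bar>s\<bar> \<le> \<delta>/2" "x \<in> {0..1}" for s x
    using B[of "(s, x)"] that by fastforce
  have "\<bar>z s x\<bar> \<le> \<bar>B\<bar> * \<bar>s\<bar>" if s: "\<bar>s\<bar> \<le> \<delta>/2" and x: "x \<in> {0..1}" for s x
  proof -
    have der: "((\<lambda>\<sigma>. z \<sigma> x) has_real_derivative zs \<sigma> x) (at \<sigma>)" if "\<bar>\<sigma>\<bar> \<le> \<bar>s\<bar>" for \<sigma>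
      by (rule z_ds) (use that s \<delta>_pos in auto)
    consider "s = 0" | "s > 0" | "s < 0" by linarith
    then show ?thesis
    proof cases
      case 1 then show ?thesis using z0 by simp
    next
      case 2
      obtain \<xi> where \<xi>: "0 < \<xi>" "\<xi> < s" "z s x - z 0 x = (s - 0) * zs \<xi> x"
        using MVT2[OF 2, of "\<lambda>\<sigma>. z \<sigma> x" "\<lambda>\<sigma>. zs \<sigma> x"] der by auto
      have "\<bar>zs \<xi> x\<bar> \<le> \<bar>B\<bar>" by (rule Bs) (use \<xi> s x in auto)
      then show ?thesis using \<xi> z0 2 by (simp add: abs_mult mult.commute)
    next
      case 3
      obtain \<xi> where \<xi>: "s < \<xi>" "\<xi> < 0" "z 0 x - z s x = (0 - s) * zs \<xi> x"
        using MVT2[OF 3, of "\<lambda>\<sigma>. z \<sigma> x" "\<lambda>\<sigma>. zs \<sigma> x"] der by auto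
      have "\<bar>zs \<xi> x\<bar> \<le> \<bar>B\<bar>" by (rule Bs) (use \<xi> s x in auto)
      then show ?thesis using \<xi> z0 3 by (simp add: abs_mult mult.commute)
    qed
  qed
  then show ?thesis by (intro exI[of _ "\<bar>B\<bar>"]) auto
qed

lemma ev_small: "eventually (\<lambda>s. s \<noteq> 0 \<and> \<bar>s\<bar> < \<delta>/2) (at 0)"
  unfolding eventually_at using \<delta>_pos by (intro exI[of _ "\<delta>/2"]) auto

lemma phi_bd: "\<bar>phi x\<bar> \<le> 2"
proof -
  have "\<bar>phi x\<bar> \<le> sqrt 2 * 1" unfolding phi_def abs_mult by (simp add: mult_left_le)
  also have "sqrt 2 * 1 \<le> 2" using real_sqrt_le_iff[of 2 4] by simp
  finally show ?thesis .
qed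

lemma psi_bd: "\<bar>psi x\<bar> \<le> 1" unfolding psi_def by simp

lemma Z_bd:
  assumes "\<forall>s x. \<bar>s\<bar> \<le> \<delta>/2 \<longrightarrow> x \<in> {0..1} \<longrightarrow> \<bar>z s x\<bar> \<le> C * \<bar>s\<bar>" "C \<ge> 0"
    "\<bar>s\<bar> \<le> \<delta>/2" "x \<in> {0..1}"
  shows "\<bar>Z s x\<bar> \<le> 2 + C * (\<delta>/2)"
proof -
  have "\<bar>z s x\<bar> \<le> C * \<bar>s\<bar>" using assms by auto
  also have "\<dots> \<le> C * (\<delta>/2)" using assms by (intro mult_left_mono) auto
  finally show ?thesis using phi_bd[of x] unfolding Z_def by linarith
qed

lemma z_lim:
  assumes "\<forall>s x. \<bar>s\<bar> \<le> \<delta>/2 \<longrightarrow> x \<in> {0..1} \<longrightarrow> \<bar>z s x\<bar> \<le> C * \<bar>s\<bar>" "x \<in> {0..1}"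
  shows "((\<lambda>s. z s x) \<longlongrightarrow> 0) (at 0)"
proof (rule Lim_null_comparison)
  show "eventually (\<lambda>s. norm (z s x) \<le> C * \<bar>s\<bar>) (at 0)"
    using ev_small by eventually_elim (use assms in auto)
  have "((\<lambda>s. C * \<bar>s\<bar>) \<longlongrightarrow> C * \<bar>0\<bar>) (at (0::real))" by (intro tendsto_intros)
  then show "((\<lambda>s. C * \<bar>s\<bar>) \<longlongrightarrow> 0) (at 0)" by simp
qed

lemma Z_lim:
  assumes "\<forall>s x. \<bar>s\<bar> \<le> \<delta>/2 \<longrightarrow> x \<in> {0..1} \<longrightarrow> \<bar>z s x\<bar> \<le> C * \<bar>s\<bar>" "x \<in> {0..1}"
  shows "((\<lambda>s. Z s x) \<longlongrightarrow> phi x) (at 0)"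
proof -
  have "((\<lambda>s. phi x + z s x) \<longlongrightarrow> phi x + 0) (at 0)" by (intro tendsto_intros z_lim[OF assms])
  then show ?thesis by (simp add: Z_def)
qed

end

context bif begin

lemma phi_cont: "continuous_on A phi" unfolding phi_def[abs_def] by (intro continuous_intros)
lemma psi_cont: "continuous_on A psi" unfolding psi_def[abs_def] by (intro continuous_intros)

lemma lim_A: "((\<lambda>s. integral {0..1} (\<lambda>x. phi x * Z s x)) \<longlongrightarrow> 1) (at 0)"
proof -
  obtain C where C: "C \<ge> 0" "\<forall>s x. \<bar>s\<bar> \<le> \<delta>/2 \<longrightarrow> x \<in> {0..1} \<longrightarrow> \<bar>z s x\<bar> \<le> C * \<bar>s\<bar>"
    using lin_bound by blast
  define BZ where "BZ = 2 + C * (\<delta>/2)"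
  have "((\<lambda>s. integral {0..1} (\<lambda>x. phi x * Z s x)) \<longlongrightarrow> integral {0..1} (\<lambda>x. phi x * phi x)) (at 0)"
  proof (rule dom_conv_at0[where H="\<lambda>s x. phi x * Z s x" and B="2 * BZ"])
    show "eventually (\<lambda>s. (\<lambda>x. phi x * Z s x) integrable_on {0..1} \<and> (\<forall>x\<in>{0..1}. \<bar>phi x * Z s x\<bar> \<le> 2 * BZ)) (at 0)"
      using ev_small
    proof eventually_elim
      case (elim s)
      then have s: "\<bar>s\<bar> < \<delta>" "\<bar>s\<bar> \<le> \<delta>/2" using \<delta>_pos by auto
      show ?case
      proof
        show "(\<lambda>x. phi x * Z s x) integrable_on {0..1}"
          by (intro integrable_continuous_interval continuous_intros phi_cont Z_cont s(1))
        show "\<forall>x\<in>{0..1}. \<bar>phi x * Z s x\<bar> \<le> 2 * BZ"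
          using abs_mult_le[OF phi_bd Z_bd[OF C(2) C(1) s(2)]] by (auto simp: BZ_def)
      qed
    qed
    show "((\<lambda>s. phi x * Z s x) \<longlongrightarrow> phi x * phi x) (at 0)" if "x \<in> {0..1}" for x
      by (intro tendsto_intros Z_lim[OF C(2) that])
  qed
  then show ?thesis by (simp add: int_phi2)
qed

lemma lim_Mq: "((\<lambda>s. integral {0..1} (\<lambda>x. (exp (s * Z s x) - 1 - s * Z s x) / s^2)) \<longlongrightarrow> 1/2) (at 0)"
proof -
  obtain C where C: "C \<ge> 0" "\<forall>s x. \<bar>s\<bar> \<le> \<delta>/2 \<longrightarrow> x \<in> {0..1} \<longrightarrow> \<bar>z s x\<bar> \<le> C * \<bar>s\<bar>"
    using lin_bound by blast
  define BZ where "BZ = 2 + C * (\<delta>/2)"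
  have "((\<lambda>s. integral {0..1} (\<lambda>x. (exp (s * Z s x) - 1 - s * Z s x) / s^2)) \<longlongrightarrow> integral {0..1} (\<lambda>x. (phi x)^2 / 2)) (at 0)"
  proof (rule dom_conv_at0[where H="\<lambda>s x. (exp (s * Z s x) - 1 - s * Z s x) / s^2" and B="exp (\<delta>/2 * BZ) * BZ^2 / 2"])
    show "eventually (\<lambda>s. (\<lambda>x. (exp (s * Z s x) - 1 - s * Z s x) / s^2) integrable_on {0..1} \<and>
      (\<forall>x\<in>{0..1}. \<bar>(exp (s * Z s x) - 1 - s * Z s x) / s^2\<bar> \<le> exp (\<delta>/2 * BZ) * BZ^2 / 2)) (at 0)"
      using ev_small
    proof eventually_elim
      case (elim s)
      then have s: "\<bar>s\<bar> < \<delta>" "\<bar>s\<bar> \<le> \<delta>/2" "s \<noteq> 0" using \<delta>_pos by auto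
      show ?case
      proof
        show "(\<lambda>x. (exp (s * Z s x) - 1 - s * Z s x) / s^2) integrable_on {0..1}"
          using s by (intro integrable_continuous_interval continuous_intros Z_cont s(1)) auto
        show "\<forall>x\<in>{0..1}. \<bar>(exp (s * Z s x) - 1 - s * Z s x) / s^2\<bar> \<le> exp (\<delta>/2 * BZ) * BZ^2 / 2"
          using b2[OF s(3) s(2) Z_bd[OF C(2) C(1) s(2)]] by (auto simp: BZ_def)
      qed
    qed
    show "((\<lambda>s. (exp (s * Z s x) - 1 - s * Z s x) / s^2) \<longlongrightarrow> (phi x)^2/2) (at 0)" if x: "x \<in> {0..1}" for x
    proof (rule approx_lim)
      show "((\<lambda>s. (Z s x)^2/2) \<longlongrightarrow> (phi x)^2/2) (at 0)"
        by (auto intro!: tendsto_intros Z_lim[OF C(2) x])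
      show "eventually (\<lambda>s. \<bar>(exp (s * Z s x) - 1 - s * Z s x) / s^2 - (Z s x)^2/2\<bar> \<le> \<bar>s\<bar> * (exp (\<delta>/2 * BZ) * BZ^3 / 6)) (at 0)"
        using ev_small
      proof eventually_elim
        case (elim s)
        then have s: "\<bar>s\<bar> \<le> \<delta>/2" "s \<noteq> 0" using \<delta>_pos by auto
        have "\<bar>(exp (s * Z s x) - 1 - s * Z s x) / s^2 - (Z s x)^2/2\<bar>
            = \<bar>s\<bar> * \<bar>(exp (s * Z s x) - 1 - s * Z s x - (s * Z s x)^2/2) / s^3\<bar>"
          by (simp only: id2[OF s(2)] abs_mult)
        also have "\<dots> \<le> \<bar>s\<bar> * (exp (\<delta>/2 * BZ) * BZ^3 / 6)"
          using b3[OF s(2) s(1) Z_bd[OF C(2) C(1) s(1) x]] unfolding BZ_def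
          by (intro mult_left_mono) auto
        finally show ?case .
      qed
      have "((\<lambda>s. \<bar>s\<bar> * (exp (\<delta>/2 * BZ) * BZ^3 / 6)) \<longlongrightarrow> \<bar>0\<bar> * (exp (\<delta>/2 * BZ) * BZ^3 / 6)) (at (0::real))"
        by (intro tendsto_intros)
      then show "((\<lambda>s. \<bar>s\<bar> * (exp (\<delta>/2 * BZ) * BZ^3 / 6)) \<longlongrightarrow> 0) (at 0)" by simp
    qed
  qed
  moreover have "integral {0..1} (\<lambda>x. (phi x)^2 / 2) = 1/2"
    using int_phi2 by (simp add: power2_eq_square integral_divide)
  ultimately show ?thesis by simp
qed

end

lemma abs_s_le: fixes s R K :: real shows "\<bar>R\<bar> \<le> K \<Longrightarrow> \<bar>s * R\<bar> \<le> \<bar>s\<bar> * K"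
  by (simp add: abs_mult mult_left_mono)

context bif begin

lemma lim_T3: "((\<lambda>s. integral {0..1} (\<lambda>x. phi x * ((exp (s * Z s x) - 1 - s * Z s x - (s * Z s x)^2/2) / s^3))) \<longlongrightarrow> 1/4) (at 0)"
proof -
  obtain C where C: "C \<ge> 0" "\<forall>s x. \<bar>s\<bar> \<le> \<delta>/2 \<longrightarrow> x \<in> {0..1} \<longrightarrow> \<bar>z s x\<bar> \<le> C * \<bar>s\<bar>"
    using lin_bound by blast
  define BZ where "BZ = 2 + C * (\<delta>/2)"
  have "((\<lambda>s. integral {0..1} (\<lambda>x. phi x * ((exp (s * Z s x) - 1 - s * Z s x - (s * Z s x)^2/2) / s^3)))
        \<longlongrightarrow> integral {0..1} (\<lambda>x. phi x * ((phi x)^3 / 6))) (at 0)"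
  proof (rule dom_conv_at0[where H="\<lambda>s x. phi x * ((exp (s * Z s x) - 1 - s * Z s x - (s * Z s x)^2/2) / s^3)"
          and B="2 * (exp (\<delta>/2 * BZ) * BZ^3 / 6)"])
    show "eventually (\<lambda>s. (\<lambda>x. phi x * ((exp (s * Z s x) - 1 - s * Z s x - (s * Z s x)^2/2) / s^3)) integrable_on {0..1} \<and>
      (\<forall>x\<in>{0..1}. \<bar>phi x * ((exp (s * Z s x) - 1 - s * Z s x - (s * Z s x)^2/2) / s^3)\<bar> \<le> 2 * (exp (\<delta>/2 * BZ) * BZ^3 / 6))) (at 0)"
      using ev_small
    proof eventually_elim
      case (elim s)
      then have s: "\<bar>s\<bar> < \<delta>" "\<bar>s\<bar> \<le> \<delta>/2" "s \<noteq> 0" using \<delta>_pos by auto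
      show ?case
      proof
        show "(\<lambda>x. phi x * ((exp (s * Z s x) - 1 - s * Z s x - (s * Z s x)^2/2) / s^3)) integrable_on {0..1}"
          using s by (intro integrable_continuous_interval continuous_intros phi_cont Z_cont s(1)) auto
        show "\<forall>x\<in>{0..1}. \<bar>phi x * ((exp (s * Z s x) - 1 - s * Z s x - (s * Z s x)^2/2) / s^3)\<bar> \<le> 2 * (exp (\<delta>/2 * BZ) * BZ^3 / 6)"
          using abs_mult_le[OF phi_bd b3[OF s(3) s(2) Z_bd[OF C(2) C(1) s(2)]]] by (auto simp: BZ_def)
      qed
    qed
    show "((\<lambda>s. phi x * ((exp (s * Z s x) - 1 - s * Z s x - (s * Z s x)^2/2) / s^3)) \<longlongrightarrow> phi x * ((phi x)^3 / 6)) (at 0)"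
      if x: "x \<in> {0..1}" for x
    proof (rule approx_lim)
      show "((\<lambda>s. phi x * ((Z s x)^3/6)) \<longlongrightarrow> phi x * ((phi x)^3 / 6)) (at 0)"
        by (auto intro!: tendsto_intros Z_lim[OF C(2) x])
      show "eventually (\<lambda>s. \<bar>phi x * ((exp (s * Z s x) - 1 - s * Z s x - (s * Z s x)^2/2) / s^3) - phi x * ((Z s x)^3/6)\<bar>
            \<le> 2 * (\<bar>s\<bar> * (exp (\<delta>/2 * BZ) * BZ^4 / 24))) (at 0)"
        using ev_small
      proof eventually_elim
        case (elim s)
        then have s: "\<bar>s\<bar> \<le> \<delta>/2" "s \<noteq> 0" using \<delta>_pos by auto
        have "\<bar>phi x * ((exp (s * Z s x) - 1 - s * Z s x - (s * Z s x)^2/2) / s^3) - phi x * ((Z s x)^3/6)\<bar>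
            = \<bar>phi x * (s * ((exp (s * Z s x) - 1 - s * Z s x - (s * Z s x)^2/2 - (s * Z s x)^3/6) / s^4))\<bar>"
          by (simp only: id3[OF s(2)] right_diff_distrib[symmetric])
        also have "\<dots> \<le> 2 * (\<bar>s\<bar> * (exp (\<delta>/2 * BZ) * BZ^4 / 24))"
          by (rule abs_mult_le[OF phi_bd abs_s_le[OF b4[OF s(2) s(1) Z_bd[OF C(2) C(1) s(1) x, folded BZ_def]]]])
        finally show ?case .
      qed
      have "((\<lambda>s. 2 * (\<bar>s\<bar> * (exp (\<delta>/2 * BZ) * BZ^4 / 24))) \<longlongrightarrow> 2 * (\<bar>0\<bar> * (exp (\<delta>/2 * BZ) * BZ^4 / 24))) (at (0::real))"
        by (intro tendsto_intros)
      then show "((\<lambda>s. 2 * (\<bar>s\<bar> * (exp (\<delta>/2 * BZ) * BZ^4 / 24))) \<longlongrightarrow> 0) (at 0)" by simp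
    qed
  qed
  moreover have "integral {0..1} (\<lambda>x. phi x * ((phi x)^3 / 6)) = 1/4"
  proof -
    have "integral {0..1} (\<lambda>x. phi x * ((phi x)^3 / 6)) = integral {0..1} (\<lambda>x. phi x * (phi x)^3 / 6)" by simp
    also have "\<dots> = 1/4" using int_phi3 by (simp add: integral_divide)
    finally show ?thesis .
  qed
  ultimately show ?thesis by (simp only:)
qed

lemma lim_T2: "((\<lambda>s. integral {0..1} (\<lambda>x. psi x * ((exp (s * Z s x) - 1 - s * Z s x) / s^2))) \<longlongrightarrow> 1/4) (at 0)"
proof -
  obtain C where C: "C \<ge> 0" "\<forall>s x. \<bar>s\<bar> \<le> \<delta>/2 \<longrightarrow> x \<in> {0..1} \<longrightarrow> \<bar>z s x\<bar> \<le> C * \<bar>s\<bar>"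
    using lin_bound by blast
  define BZ where "BZ = 2 + C * (\<delta>/2)"
  have "((\<lambda>s. integral {0..1} (\<lambda>x. psi x * ((exp (s * Z s x) - 1 - s * Z s x) / s^2)))
        \<longlongrightarrow> integral {0..1} (\<lambda>x. psi x * ((phi x)^2 / 2))) (at 0)"
  proof (rule dom_conv_at0[where H="\<lambda>s x. psi x * ((exp (s * Z s x) - 1 - s * Z s x) / s^2)"
          and B="1 * (exp (\<delta>/2 * BZ) * BZ^2 / 2)"])
    show "eventually (\<lambda>s. (\<lambda>x. psi x * ((exp (s * Z s x) - 1 - s * Z s x) / s^2)) integrable_on {0..1} \<and>
      (\<forall>x\<in>{0..1}. \<bar>psi x * ((exp (s * Z s x) - 1 - s * Z s x) / s^2)\<bar> \<le> 1 * (exp (\<delta>/2 * BZ) * BZ^2 / 2))) (at 0)"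
      using ev_small
    proof eventually_elim
      case (elim s)
      then have s: "\<bar>s\<bar> < \<delta>" "\<bar>s\<bar> \<le> \<delta>/2" "s \<noteq> 0" using \<delta>_pos by auto
      show ?case
      proof
        show "(\<lambda>x. psi x * ((exp (s * Z s x) - 1 - s * Z s x) / s^2)) integrable_on {0..1}"
          using s by (intro integrable_continuous_interval continuous_intros psi_cont Z_cont s(1)) auto
        show "\<forall>x\<in>{0..1}. \<bar>psi x * ((exp (s * Z s x) - 1 - s * Z s x) / s^2)\<bar> \<le> 1 * (exp (\<delta>/2 * BZ) * BZ^2 / 2)"
          using abs_mult_le[OF psi_bd b2[OF s(3) s(2) Z_bd[OF C(2) C(1) s(2)]]] by (auto simp: BZ_def)
      qed
    qed
    show "((\<lambda>s. psi x * ((exp (s * Z s x) - 1 - s * Z s x) / s^2)) \<longlongrightarrow> psi x * ((phi x)^2 / 2)) (at 0)"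
      if x: "x \<in> {0..1}" for x
    proof (rule approx_lim)
      show "((\<lambda>s. psi x * ((Z s x)^2/2)) \<longlongrightarrow> psi x * ((phi x)^2 / 2)) (at 0)"
        by (auto intro!: tendsto_intros Z_lim[OF C(2) x])
      show "eventually (\<lambda>s. \<bar>psi x * ((exp (s * Z s x) - 1 - s * Z s x) / s^2) - psi x * ((Z s x)^2/2)\<bar>
            \<le> 1 * (\<bar>s\<bar> * (exp (\<delta>/2 * BZ) * BZ^3 / 6))) (at 0)"
        using ev_small
      proof eventually_elim
        case (elim s)
        then have s: "\<bar>s\<bar> \<le> \<delta>/2" "s \<noteq> 0" using \<delta>_pos by auto
        have "\<bar>psi x * ((exp (s * Z s x) - 1 - s * Z s x) / s^2) - psi x * ((Z s x)^2/2)\<bar>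
            = \<bar>psi x * (s * ((exp (s * Z s x) - 1 - s * Z s x - (s * Z s x)^2/2) / s^3))\<bar>"
          by (simp only: id2[OF s(2)] right_diff_distrib[symmetric])
        also have "\<dots> \<le> 1 * (\<bar>s\<bar> * (exp (\<delta>/2 * BZ) * BZ^3 / 6))"
          by (rule abs_mult_le[OF psi_bd abs_s_le[OF b3[OF s(2) s(1) Z_bd[OF C(2) C(1) s(1) x, folded BZ_def]]]])
        finally show ?case .
      qed
      have "((\<lambda>s. 1 * (\<bar>s\<bar> * (exp (\<delta>/2 * BZ) * BZ^3 / 6))) \<longlongrightarrow> 1 * (\<bar>0\<bar> * (exp (\<delta>/2 * BZ) * BZ^3 / 6))) (at (0::real))"
        by (intro tendsto_intros)
      then show "((\<lambda>s. 1 * (\<bar>s\<bar> * (exp (\<delta>/2 * BZ) * BZ^3 / 6))) \<longlongrightarrow> 0) (at 0)" by simp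
    qed
  qed
  moreover have "integral {0..1} (\<lambda>x. psi x * ((phi x)^2 / 2)) = 1/4"
  proof -
    have "integral {0..1} (\<lambda>x. psi x * ((phi x)^2 / 2)) = integral {0..1} (\<lambda>x. psi x * (phi x)^2 / 2)" by simp
    also have "\<dots> = 1/4" using int_psi_phi2 by (simp add: integral_divide)
    finally show ?thesis .
  qed
  ultimately show ?thesis by (simp only:)
qed

lemma lim_P1: "((\<lambda>s. integral {0..1} (\<lambda>x. phi x * ((exp (s * Z s x) - 1 - s * Z s x) / s))) \<longlongrightarrow> 0) (at 0)"
proof -
  obtain C where C: "C \<ge> 0" "\<forall>s x. \<bar>s\<bar> \<le> \<delta>/2 \<longrightarrow> x \<in> {0..1} \<longrightarrow> \<bar>z s x\<bar> \<le> C * \<bar>s\<bar>"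
    using lin_bound by blast
  define BZ where "BZ = 2 + C * (\<delta>/2)"
  have bnd: "\<bar>phi x * ((exp (s * Z s x) - 1 - s * Z s x) / s)\<bar> \<le> 2 * (\<bar>s\<bar> * (exp (\<delta>/2 * BZ) * BZ^2 / 2))"
    if s: "\<bar>s\<bar> \<le> \<delta>/2" "s \<noteq> 0" and x: "x \<in> {0..1}" for s x
    unfolding id1[OF s(2)]
    by (rule abs_mult_le[OF phi_bd abs_s_le[OF b2[OF s(2) s(1) Z_bd[OF C(2) C(1) s(1) x, folded BZ_def]]]])
  have "((\<lambda>s. integral {0..1} (\<lambda>x. phi x * ((exp (s * Z s x) - 1 - s * Z s x) / s)))
        \<longlongrightarrow> integral {0..1} (\<lambda>x::real. 0::real)) (at 0)"
  proof (rule dom_conv_at0[where H="\<lambda>s x. phi x * ((exp (s * Z s x) - 1 - s * Z s x) / s)"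
          and B="2 * (\<delta>/2 * (exp (\<delta>/2 * BZ) * BZ^2 / 2))"])
    show "eventually (\<lambda>s. (\<lambda>x. phi x * ((exp (s * Z s x) - 1 - s * Z s x) / s)) integrable_on {0..1} \<and>
      (\<forall>x\<in>{0..1}. \<bar>phi x * ((exp (s * Z s x) - 1 - s * Z s x) / s)\<bar> \<le> 2 * (\<delta>/2 * (exp (\<delta>/2 * BZ) * BZ^2 / 2)))) (at 0)"
      using ev_small
    proof eventually_elim
      case (elim s)
      then have s: "\<bar>s\<bar> < \<delta>" "\<bar>s\<bar> \<le> \<delta>/2" "s \<noteq> 0" using \<delta>_pos by auto
      show ?case
      proof
        show "(\<lambda>x. phi x * ((exp (s * Z s x) - 1 - s * Z s x) / s)) integrable_on {0..1}"
          using s by (intro integrable_continuous_interval continuous_intros phi_cont Z_cont s(1)) auto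
        have "2 * (\<bar>s\<bar> * (exp (\<delta>/2 * BZ) * BZ^2 / 2)) \<le> 2 * (\<delta>/2 * (exp (\<delta>/2 * BZ) * BZ^2 / 2))"
          using s(2) by (intro mult_left_mono mult_right_mono) auto
        then show "\<forall>x\<in>{0..1}. \<bar>phi x * ((exp (s * Z s x) - 1 - s * Z s x) / s)\<bar> \<le> 2 * (\<delta>/2 * (exp (\<delta>/2 * BZ) * BZ^2 / 2))"
          using bnd[OF s(2) s(3)] by (meson order_trans)
      qed
    qed
    show "((\<lambda>s. phi x * ((exp (s * Z s x) - 1 - s * Z s x) / s)) \<longlongrightarrow> 0) (at 0)"
      if x: "x \<in> {0..1}" for x
    proof (rule Lim_null_comparison)
      show "eventually (\<lambda>s. norm (phi x * ((exp (s * Z s x) - 1 - s * Z s x) / s)) \<le> 2 * (\<bar>s\<bar> * (exp (\<delta>/2 * BZ) * BZ^2 / 2))) (at 0)"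
        using ev_small by eventually_elim (use bnd x in auto)
      have "((\<lambda>s. 2 * (\<bar>s\<bar> * (exp (\<delta>/2 * BZ) * BZ^2 / 2))) \<longlongrightarrow> 2 * (\<bar>0\<bar> * (exp (\<delta>/2 * BZ) * BZ^2 / 2))) (at (0::real))"
        by (intro tendsto_intros)
      then show "((\<lambda>s. 2 * (\<bar>s\<bar> * (exp (\<delta>/2 * BZ) * BZ^2 / 2))) \<longlongrightarrow> 0) (at 0)" by simp
    qed
  qed
  then show ?thesis by simp
qed

lemma lim_Qz: "((\<lambda>s. integral {0..1} (\<lambda>x. phi x * z s x * (z s x / s))) \<longlongrightarrow> 0) (at 0)"
proof -
  obtain C where C: "C \<ge> 0" "\<forall>s x. \<bar>s\<bar> \<le> \<delta>/2 \<longrightarrow> x \<in> {0..1} \<longrightarrow> \<bar>z s x\<bar> \<le> C * \<bar>s\<bar>"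
    using lin_bound by blast
  have bnd: "\<bar>phi x * z s x * (z s x / s)\<bar> \<le> 2 * (C * \<bar>s\<bar>) * C"
    if s: "\<bar>s\<bar> \<le> \<delta>/2" "s \<noteq> 0" and x: "x \<in> {0..1}" for s x
  proof -
    have z1: "\<bar>z s x\<bar> \<le> C * \<bar>s\<bar>" using C s x by auto
    have "\<bar>z s x / s\<bar> \<le> C" using z1 s(2) by (simp add: divide_le_eq abs_divide)
    then show ?thesis by (intro abs_mult_le[OF abs_mult_le[OF phi_bd z1]])
  qed
  have "((\<lambda>s. integral {0..1} (\<lambda>x. phi x * z s x * (z s x / s))) \<longlongrightarrow> integral {0..1} (\<lambda>x::real. 0::real)) (at 0)"
  proof (rule dom_conv_at0[where H="\<lambda>s x. phi x * z s x * (z s x / s)" and B="2 * (C * (\<delta>/2)) * C"])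
    show "eventually (\<lambda>s. (\<lambda>x. phi x * z s x * (z s x / s)) integrable_on {0..1} \<and>
      (\<forall>x\<in>{0..1}. \<bar>phi x * z s x * (z s x / s)\<bar> \<le> 2 * (C * (\<delta>/2)) * C)) (at 0)"
      using ev_small
    proof eventually_elim
      case (elim s)
      then have s: "\<bar>s\<bar> < \<delta>" "\<bar>s\<bar> \<le> \<delta>/2" "s \<noteq> 0" using \<delta>_pos by auto
      show ?case
      proof
        show "(\<lambda>x. phi x * z s x * (z s x / s)) integrable_on {0..1}"
          using s by (intro integrable_continuous_interval continuous_intros phi_cont z_cont_x s(1)) auto
        have "2 * (C * \<bar>s\<bar>) * C \<le> 2 * (C * (\<delta>/2)) * C"
          using s(2) C(1) by (intro mult_left_mono mult_right_mono) auto
        then show "\<forall>x\<in>{0..1}. \<bar>phi x * z s x * (z s x / s)\<bar> \<le> 2 * (C * (\<delta>/2)) * C"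
          using bnd[OF s(2) s(3)] by (meson order_trans)
      qed
    qed
    show "((\<lambda>s. phi x * z s x * (z s x / s)) \<longlongrightarrow> 0) (at 0)" if x: "x \<in> {0..1}" for x
    proof (rule Lim_null_comparison)
      show "eventually (\<lambda>s. norm (phi x * z s x * (z s x / s)) \<le> 2 * (C * \<bar>s\<bar>) * C) (at 0)"
        using ev_small by eventually_elim (use bnd x in auto)
      have "((\<lambda>s. 2 * (C * \<bar>s\<bar>) * C) \<longlongrightarrow> 2 * (C * \<bar>0\<bar>) * C) (at (0::real))"
        by (intro tendsto_intros)
      then show "((\<lambda>s. 2 * (C * \<bar>s\<bar>) * C) \<longlongrightarrow> 0) (at 0)" by simp
    qed
  qed
  then show ?thesis by simp
qed

end

lemma alg3: fixes s p w e :: real assumes "s \<noteq> 0"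
  shows "p * ((e - 1 - s*(p+w))/s) = s^2*(p*((e - 1 - s*(p+w) - (s*(p+w))^2/2)/s^3)) + s/2*p^3 + s*w + s*((p^2-1)*w) + s^2/2*(p*w*(w/s))"
  using assms by (simp add: field_simps power2_eq_square power3_eq_cube)

context bif begin

definition "A s = integral {0..1} (\<lambda>x. phi x * Z s x)"
definition "Mq s = integral {0..1} (\<lambda>x. (exp (s * Z s x) - 1 - s * Z s x) / s^2)"
definition "T3 s = integral {0..1} (\<lambda>x. phi x * ((exp (s * Z s x) - 1 - s * Z s x - (s * Z s x)^2/2) / s^3))"
definition "Qz s = integral {0..1} (\<lambda>x. phi x * z s x * (z s x / s))"
definition "P1 s = integral {0..1} (\<lambda>x. phi x * ((exp (s * Z s x) - 1 - s * Z s x) / s))"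
definition "T2 s = integral {0..1} (\<lambda>x. psi x * ((exp (s * Z s x) - 1 - s * Z s x) / s^2))"
definition "Jz s = integral {0..1} (\<lambda>x. psi x * z s x)"

lemma cint: fixes f :: "real \<Rightarrow> real" shows "continuous_on {0..1} f \<Longrightarrow> (f has_integral integral {0..1} f) {0..1}"
  by (intro integrable_integral integrable_continuous_interval)

lemma ids:
  assumes s0: "s \<noteq> 0" and s1: "\<bar>s\<bar> < \<delta>"
  shows "M s = 1 + s^2 * Mq s"
    and "integral {0..1} (\<lambda>x. phi x * exp (s * Z s x)) = s * P1 s + s * A s"
    and "integral {0..1} (\<lambda>x. psi x * exp (s * Z s x)) = s^2 * T2 s + s * Jz s"
    and "integral {0..1} (\<lambda>x. psi x * Z s x) = Jz s"
    and "P1 s = s^2 * T3 s + s * Jz s + s^2/2 * Qz s"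
proof -
  have zc: "continuous_on {0..1} (z s)" by (rule z_cont_x[OF s1])
  have Zc: "continuous_on {0..1} (Z s)" by (rule Z_cont[OF s1])
  have iZ: "integral {0..1} (Z s) = 0" using eq_one[OF s1] s0 by auto
  have iz: "integral {0..1} (z s) = 0"
  proof -
    have "integral {0..1} (Z s) = integral {0..1} phi + integral {0..1} (z s)"
      unfolding Z_def[abs_def]
      by (rule integral_add) (auto intro: integrable_continuous_interval phi_cont zc)
    then show ?thesis using iZ int_phi by simp
  qed
  have "((\<lambda>x. s^2 * ((exp (s * Z s x) - 1 - s * Z s x) / s^2) + 1 + s * Z s x) has_integral
        (s^2 * Mq s + 1 + s * integral {0..1} (Z s))) {0..1}"
    unfolding Mq_def
    by (intro has_integral_add has_integral_mult_right cint int_one continuous_intros Zc) (use s0 in auto)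
  moreover have "s^2 * ((exp (s * Z s x) - 1 - s * Z s x) / s^2) + 1 + s * Z s x = exp (s * Z s x)" for x
    using s0 by simp
  ultimately have "((\<lambda>x. exp (s * Z s x)) has_integral (s^2 * Mq s + 1)) {0..1}" using iZ by simp
  then show "M s = 1 + s^2 * Mq s" unfolding M_def by (simp add: integral_unique)
  have "((\<lambda>x. s * (phi x * ((exp (s * Z s x) - 1 - s * Z s x) / s)) + phi x + s * (phi x * Z s x)) has_integral
        (s * P1 s + integral {0..1} phi + s * A s)) {0..1}"
    unfolding P1_def A_def
    by (intro has_integral_add has_integral_mult_right cint continuous_intros Zc phi_cont) (use s0 in auto)
  moreover have "s * (phi x * ((exp (s * Z s x) - 1 - s * Z s x) / s)) + phi x + s * (phi x * Z s x) = phi x * exp (s * Z s x)" for x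
    using s0 by (simp add: field_simps)
  ultimately have "((\<lambda>x. phi x * exp (s * Z s x)) has_integral (s * P1 s + s * A s)) {0..1}"
    using int_phi by simp
  then show "integral {0..1} (\<lambda>x. phi x * exp (s * Z s x)) = s * P1 s + s * A s" by (simp add: integral_unique)
  have "((\<lambda>x. psi x * phi x + psi x * z s x) has_integral (integral {0..1} (\<lambda>x. psi x * phi x) + Jz s)) {0..1}"
    unfolding Jz_def
    by (intro has_integral_add cint continuous_intros zc phi_cont psi_cont)
  moreover have "integral {0..1} (\<lambda>x. psi x * phi x) = 0" using int_phi_psi by (simp add: mult.commute)
  moreover have "psi x * phi x + psi x * z s x = psi x * Z s x" for x by (simp add: Z_def algebra_simps)
  ultimately have psiZ: "((\<lambda>x. psi x * Z s x) has_integral Jz s) {0..1}" by simp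
  then show "integral {0..1} (\<lambda>x. psi x * Z s x) = Jz s" by (simp add: integral_unique)
  have "((\<lambda>x. s^2 * (psi x * ((exp (s * Z s x) - 1 - s * Z s x) / s^2)) + psi x + s * (psi x * Z s x)) has_integral
        (s^2 * T2 s + integral {0..1} psi + s * Jz s)) {0..1}"
    unfolding T2_def
    by (intro has_integral_add has_integral_mult_right cint continuous_intros Zc psi_cont psiZ) (use s0 in auto)
  moreover have "s^2 * (psi x * ((exp (s * Z s x) - 1 - s * Z s x) / s^2)) + psi x + s * (psi x * Z s x) = psi x * exp (s * Z s x)" for x
    using s0 by (simp add: field_simps)
  ultimately have "((\<lambda>x. psi x * exp (s * Z s x)) has_integral (s^2 * T2 s + s * Jz s)) {0..1}"
    using int_psi by simp
  then show "integral {0..1} (\<lambda>x. psi x * exp (s * Z s x)) = s^2 * T2 s + s * Jz s" by (simp add: integral_unique)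
  have "((\<lambda>x. s^2*(phi x*((exp (s * Z s x) - 1 - s*(phi x + z s x) - (s*(phi x + z s x))^2/2)/s^3))
          + s/2*(phi x)^3 + s*z s x + s*(psi x * z s x) + s^2/2*(phi x * z s x * (z s x / s))) has_integral
        (s^2 * T3 s + s/2 * integral {0..1} (\<lambda>x. (phi x)^3) + s * integral {0..1} (z s) + s * Jz s + s^2/2 * Qz s)) {0..1}"
    unfolding T3_def Jz_def Qz_def Z_def
    by (intro has_integral_add has_integral_mult_right cint continuous_intros zc phi_cont psi_cont) (use s0 in auto)
  moreover have "s^2*(phi x*((exp (s * Z s x) - 1 - s*(phi x + z s x) - (s*(phi x + z s x))^2/2)/s^3))
          + s/2*(phi x)^3 + s*z s x + s*(psi x * z s x) + s^2/2*(phi x * z s x * (z s x / s))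
       = phi x * ((exp (s * Z s x) - 1 - s * Z s x) / s)" for x
  proof -
    have "psi x = (phi x)^2 - 1" using phi_sq[of x] by simp
    then show ?thesis using alg3[OF s0, of "phi x" "exp (s * Z s x)" "z s x"] by (simp add: Z_def)
  qed
  ultimately have "((\<lambda>x. phi x * ((exp (s * Z s x) - 1 - s * Z s x) / s)) has_integral (s^2 * T3 s + s * Jz s + s^2/2 * Qz s)) {0..1}"
    using int_phi_cube iz by simp
  then show "P1 s = s^2 * T3 s + s * Jz s + s^2/2 * Qz s" unfolding P1_def by (rule integral_unique)
qed

end

context bif begin

lemma \<alpha>_lim: "(\<alpha> \<longlongrightarrow> 0) (at 0)"
proof -
  have "isCont \<alpha> 0" using \<alpha>_d[of 0] \<delta>_pos by (auto intro: DERIV_isCont)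
  then show ?thesis using \<alpha>0 by (simp add: isCont_def)
qed

lemma lam_lim: "(lam \<longlongrightarrow> kappa D n) (at 0)"
proof -
  have "((\<lambda>s. kappa D n + \<alpha> s) \<longlongrightarrow> kappa D n + 0) (at 0)" by (intro tendsto_intros \<alpha>_lim)
  then show ?thesis by (simp add: lam_def[abs_def])
qed

lemma M_lim: "(M \<longlongrightarrow> 1) (at 0)"
proof -
  have "((\<lambda>s. 1 + s^2 * Mq s) \<longlongrightarrow> 1 + 0^2 * (1/2)) (at (0::real))"
    by (intro tendsto_intros lim_Mq[folded Mq_def[abs_def]])
  then have "((\<lambda>s. 1 + s^2 * Mq s) \<longlongrightarrow> 1) (at 0)" by simp
  moreover have "eventually (\<lambda>s. 1 + s^2 * Mq s = M s) (at 0)"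
    using ev_small by eventually_elim (use \<delta>_pos ids(1) in auto)
  ultimately show ?thesis by (rule Lim_transform_eventually)
qed

definition "K2 = 1 + 16 * pi\<^sup>2 * (real n)\<^sup>2 * D"

lemma K2_gt: "K2 - kappa D n > 0"
  using D_pos n_pos by (simp add: K2_def kappa_def)

lemma Jq_lim: "((\<lambda>s. Jz s / s) \<longlongrightarrow> kappa D n * (1/4) / (K2 - kappa D n)) (at 0)"
proof -
  have den: "((\<lambda>s. K2 * M s - lam s) \<longlongrightarrow> K2 * 1 - kappa D n) (at 0)"
    by (intro tendsto_intros M_lim lam_lim)
  have "((\<lambda>s. lam s * T2 s / (K2 * M s - lam s)) \<longlongrightarrow> kappa D n * (1/4) / (K2 * 1 - kappa D n)) (at 0)"
    using K2_gt by (intro tendsto_intros lam_lim lim_T2[folded T2_def[abs_def]] den) auto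
  moreover have "eventually (\<lambda>s. K2 * M s - lam s \<noteq> 0) (at 0)"
    using tendsto_imp_eventually_ne[OF den, of 0] K2_gt by simp
  then have "eventually (\<lambda>s. lam s * T2 s / (K2 * M s - lam s) = Jz s / s) (at 0)"
    using ev_small
  proof eventually_elim
    case (elim s)
    then have s0: "s \<noteq> 0" and s1: "\<bar>s\<bar> < \<delta>" using \<delta>_pos by auto
    have Mp: "M s > 0" by (rule M_pos[OF s1])
    have e: "K2 * s * Jz s - lam s / M s * (s^2 * T2 s + s * Jz s) = 0"
      using eq_psi[OF s1] ids(3,4)[OF s0 s1] by (simp add: K2_def)
    then have "K2 * s * Jz s * M s = lam s * (s^2 * T2 s + s * Jz s)"
      using Mp by (simp add: field_simps)
    then have "s * (K2 * Jz s * M s) = s * (lam s * (s * T2 s + Jz s))"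
      by (simp add: algebra_simps power2_eq_square)
    then have "K2 * Jz s * M s = lam s * (s * T2 s + Jz s)" using s0 by simp
    then have "Jz s / s * (K2 * M s - lam s) = lam s * T2 s"
      using s0 by (simp add: field_simps)
    then show ?case using elim(1) by (simp add: field_simps)
  qed
  ultimately show ?thesis by (simp add: Lim_transform_eventually)
qed

definition "Lval = kappa D n * (1/4 - kappa D n * (1/4) / (K2 - kappa D n))"

lemma ratio_lim: "((\<lambda>s. \<alpha> s / s^2) \<longlongrightarrow> Lval) (at 0)"
proof -
  define Jq where "Jq = (\<lambda>s. Jz s / s)"
  have jq: "(Jq \<longlongrightarrow> kappa D n * (1/4) / (K2 - kappa D n)) (at 0)" unfolding Jq_def by (rule Jq_lim)
  have nm: "((\<lambda>s. kappa D n * (A s * Mq s - T3 s - Jq s - Qz s / 2)) \<longlongrightarrow>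
        kappa D n * (1 * (1/2) - 1/4 - kappa D n * (1/4) / (K2 - kappa D n) - 0 / 2)) (at 0)"
    by (intro tendsto_intros lim_A[folded A_def[abs_def]] lim_Mq[folded Mq_def[abs_def]]
        lim_T3[folded T3_def[abs_def]] jq lim_Qz[folded Qz_def[abs_def]]) simp
  have dn: "((\<lambda>s. P1 s + A s) \<longlongrightarrow> 0 + 1) (at 0)"
    by (intro tendsto_intros lim_A[folded A_def[abs_def]] lim_P1[folded P1_def[abs_def]])
  have "((\<lambda>s. kappa D n * (A s * Mq s - T3 s - Jq s - Qz s / 2) / (P1 s + A s)) \<longlongrightarrow>
        kappa D n * (1 * (1/2) - 1/4 - kappa D n * (1/4) / (K2 - kappa D n) - 0 / 2) / (0 + 1)) (at 0)"
    by (intro tendsto_divide nm dn) simp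
  moreover have "kappa D n * (1 * (1/2) - 1/4 - kappa D n * (1/4) / (K2 - kappa D n) - 0 / 2) / (0 + 1) = Lval"
    by (simp add: Lval_def)
  moreover have "eventually (\<lambda>s. P1 s + A s \<noteq> 0) (at 0)"
    using tendsto_imp_eventually_ne[OF dn, of 0] by simp
  then have "eventually (\<lambda>s. kappa D n * (A s * Mq s - T3 s - Jq s - Qz s / 2) / (P1 s + A s) = \<alpha> s / s^2) (at 0)"
    using ev_small
  proof eventually_elim
    case (elim s)
    then have s0: "s \<noteq> 0" and s1: "\<bar>s\<bar> < \<delta>" using \<delta>_pos by auto
    have Mp: "M s > 0" by (rule M_pos[OF s1])
    have e: "kappa D n * s * A s - lam s / M s * (s * P1 s + s * A s) = 0"
      using eq_phi[OF s1] ids(2)[OF s0 s1] by (simp add: A_def)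
    then have "kappa D n * s * A s * M s = lam s * (s * P1 s + s * A s)"
      using Mp by (simp add: field_simps)
    then have "s * (kappa D n * A s * M s) = s * (lam s * (P1 s + A s))"
      by (simp add: algebra_simps)
    then have h1: "kappa D n * A s * M s = lam s * (P1 s + A s)" using s0 by simp
    have h2: "\<alpha> s * (P1 s + A s) = kappa D n * (s^2 * (A s * Mq s) - s^2 * T3 s - s * Jz s - s^2/2 * Qz s)"
    proof -
      have "\<alpha> s * (P1 s + A s) = lam s * (P1 s + A s) - kappa D n * (P1 s + A s)"
        by (simp add: lam_def algebra_simps)
      also have "\<dots> = kappa D n * (A s * M s - P1 s - A s)" using h1 by (simp add: algebra_simps)
      also have "\<dots> = kappa D n * (s^2 * (A s * Mq s) - s^2 * T3 s - s * Jz s - s^2/2 * Qz s)"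
        using ids(1,5)[OF s0 s1] by (simp add: algebra_simps)
      finally show ?thesis .
    qed
    define X where "X = kappa D n * (A s * Mq s - T3 s - Jq s - Qz s / 2)"
    have h3: "kappa D n * (s^2 * (A s * Mq s) - s^2 * T3 s - s * Jz s - s^2/2 * Qz s) = s^2 * X"
      using s0 by (simp add: X_def Jq_def field_simps power2_eq_square)
    have "\<alpha> s / s^2 = (\<alpha> s * (P1 s + A s)) / (s^2 * (P1 s + A s))" using elim(1) by simp
    also have "\<dots> = (s^2 * X) / (s^2 * (P1 s + A s))" using h2 h3 by simp
    also have "\<dots> = X / (P1 s + A s)" using s0 by simp
    finally show ?case by (simp add: X_def)
  qed
  ultimately show ?thesis by (simp add: Lim_transform_eventually)
qed

lemma a2_lim: "((\<lambda>s. \<alpha> s / s^2) \<longlongrightarrow> deriv (deriv \<alpha>) 0 / 2) (at 0)"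
proof (rule lhopital[where f'="deriv \<alpha>" and g'="\<lambda>s. 2 * s"])
  show "(\<alpha> \<longlongrightarrow> 0) (at 0)" by (rule \<alpha>_lim)
  have "((\<lambda>s::real. s^2) \<longlongrightarrow> 0^2) (at 0)" by (intro tendsto_intros)
  then show "((\<lambda>s::real. s^2) \<longlongrightarrow> 0) (at 0)" by simp
  show "eventually (\<lambda>s::real. s^2 \<noteq> 0) (at 0)" by (auto simp: eventually_at intro: exI[of _ 1])
  show "eventually (\<lambda>s::real. 2 * s \<noteq> 0) (at 0)" by (auto simp: eventually_at intro: exI[of _ 1])
  show "eventually (\<lambda>s. (\<alpha> has_real_derivative deriv \<alpha> s) (at s)) (at 0)"
    using ev_small by eventually_elim (use \<alpha>_d \<delta>_pos in auto)
  show "eventually (\<lambda>s. ((\<lambda>s. s^2) has_real_derivative 2 * s) (at s)) (at 0)"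
    by (auto intro!: always_eventually derivative_eq_intros)
  have l1: "((\<lambda>h. deriv \<alpha> h / h) \<longlongrightarrow> deriv (deriv \<alpha>) 0) (at 0)"
    using d\<alpha>_d d\<alpha>0 by (simp add: DERIV_def)
  have "((\<lambda>h. deriv \<alpha> h / h / 2) \<longlongrightarrow> deriv (deriv \<alpha>) 0 / 2) (at 0)"
    by (rule tendsto_divide[OF l1 tendsto_const]) simp
  moreover have "(\<lambda>s. deriv \<alpha> s / (2 * s)) = (\<lambda>h. deriv \<alpha> h / h / 2)" by (rule ext) simp
  ultimately show "((\<lambda>s. deriv \<alpha> s / (2 * s)) \<longlongrightarrow> deriv (deriv \<alpha>) 0 / 2) (at 0)"
    by (simp only:)
qed

lemma a2_val: "deriv (deriv \<alpha>) 0 / 2 = Lval"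
  using tendsto_unique[OF _ a2_lim ratio_lim] by simp

end

theorem mainTheorem14:
  fixes D \<delta> :: real and n :: nat
    and \<alpha> :: "real \<Rightarrow> real" and z :: "real \<Rightarrow> real \<Rightarrow> real"
  assumes D_pos: "D > 0" and n_pos: "n \<ge> 1" and \<delta>_pos: "\<delta> > 0"
    and kappa_ne: "kappa D n \<noteq> 3 / 2"
    and \<alpha>_smooth: "smooth_on {-\<delta><..<\<delta>} \<alpha>"
    and \<alpha>0: "\<alpha> 0 = 0" and d\<alpha>0: "deriv \<alpha> 0 = 0"
    and z_smooth: "smooth_on ({-\<delta><..<\<delta>} \<times> UNIV) (\<lambda>(s, x). z s x)"
    and z0: "\<forall>x. z 0 x = 0"
    and sol: "\<forall>s. \<bar>s\<bar> < \<delta> \<longrightarrow>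
               stationary_solution D (kappa D n + \<alpha> s) (branch_U D n \<alpha> z s)"
  shows "deriv (deriv \<alpha>) 0 \<noteq> 0
         \<and> (kappa D n < 3 / 2 \<longrightarrow> deriv (deriv \<alpha>) 0 < 0 \<and> subcritical D n \<alpha>)
         \<and> (kappa D n > 3 / 2 \<longrightarrow> deriv (deriv \<alpha>) 0 > 0 \<and> supercritical D n \<alpha>)
         \<and> (deriv (deriv \<alpha>) 0 < 0 \<longleftrightarrow> kappa D n < 3 / 2)
         \<and> (deriv (deriv \<alpha>) 0 > 0 \<longleftrightarrow> kappa D n > 3 / 2)
         \<and> (kappa D n < 3 / 2 \<longleftrightarrow> D < 1 / (8 * (real n)\<^sup>2 * pi\<^sup>2))
         \<and> (kappa D n > 3 / 2 \<longleftrightarrow> D > 1 / (8 * (real n)\<^sup>2 * pi\<^sup>2))"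
proof -
  interpret b: bif D \<delta> n \<alpha> z
    unfolding bif_def using D_pos n_pos \<delta>_pos \<alpha>_smooth \<alpha>0 d\<alpha>0 z_smooth z0 sol by blast
  define k where "k = kappa D n"
  define a2 where "a2 = deriv (deriv \<alpha>) 0"
  have cpos: "(real n)\<^sup>2 * pi\<^sup>2 > 0" using n_pos by simp
  have kdef: "k = 1 + 4 * ((real n)\<^sup>2 * pi\<^sup>2) * D" by (simp add: k_def kappa_def)
  have kgt: "k > 1" using cpos D_pos by (simp add: kdef)
  have K2e: "b.K2 - k = 3 * (k - 1)" by (simp add: b.K2_def kdef)
  have a2v: "a2 = 2 * (k * (1/4 - k * (1/4) / (3 * (k - 1))))"
    using b.a2_val by (simp add: a2_def b.Lval_def K2e k_def[symmetric])
  have a2m: "a2 * (6 * (k - 1)) = k * (2 * k - 3)"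
    using kgt unfolding a2v by (simp add: field_simps)
  have pos6: "6 * (k - 1) > 0" using kgt by simp
  have neg_iff: "a2 < 0 \<longleftrightarrow> k < 3/2"
  proof -
    have "a2 < 0 \<longleftrightarrow> a2 * (6 * (k - 1)) < 0" using pos6 by (simp add: mult_less_0_iff)
    also have "\<dots> \<longleftrightarrow> 2 * k - 3 < 0" unfolding a2m using kgt by (simp add: mult_less_0_iff)
    finally show ?thesis by linarith
  qed
  have pos_iff: "a2 > 0 \<longleftrightarrow> k > 3/2"
  proof -
    have "a2 > 0 \<longleftrightarrow> a2 * (6 * (k - 1)) > 0" using pos6 by (simp add: zero_less_mult_iff)
    also have "\<dots> \<longleftrightarrow> 2 * k - 3 > 0" unfolding a2m using kgt by (simp add: zero_less_mult_iff)
    finally show ?thesis by linarith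
  qed
  have ne: "a2 \<noteq> 0" using neg_iff pos_iff kappa_ne k_def by force
  have rl: "((\<lambda>s. \<alpha> s / s^2) \<longlongrightarrow> a2 / 2) (at 0)" using b.a2_lim by (simp add: a2_def)
  have sub: "subcritical D n \<alpha>" if "a2 < 0"
  proof -
    have "eventually (\<lambda>s. \<alpha> s / s^2 < 0) (at 0)"
      using order_tendstoD(2)[OF rl, of 0] that by simp
    then obtain d where d: "d > 0" "\<And>s. s \<noteq> 0 \<Longrightarrow> dist s 0 < d \<Longrightarrow> \<alpha> s / s^2 < 0"
      unfolding eventually_at by auto
    show ?thesis unfolding subcritical_def
    proof (intro exI[of _ d] conjI allI impI)
      fix s :: real assume "0 < \<bar>s\<bar> \<and> \<bar>s\<bar> < d"
      then have "\<alpha> s / s^2 < 0" "s^2 > 0" using d(2)[of s] by auto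
      then have "\<alpha> s < 0" by (simp add: divide_less_0_iff)
      then show "kappa D n + \<alpha> s < kappa D n" by simp
    qed (rule d(1))
  qed
  have sup: "supercritical D n \<alpha>" if "a2 > 0"
  proof -
    have "eventually (\<lambda>s. \<alpha> s / s^2 > 0) (at 0)"
      using order_tendstoD(1)[OF rl, of 0] that by simp
    then obtain d where d: "d > 0" "\<And>s. s \<noteq> 0 \<Longrightarrow> dist s 0 < d \<Longrightarrow> \<alpha> s / s^2 > 0"
      unfolding eventually_at by auto
    show ?thesis unfolding supercritical_def
    proof (intro exI[of _ d] conjI allI impI)
      fix s :: real assume "0 < \<bar>s\<bar> \<and> \<bar>s\<bar> < d"
      then have "\<alpha> s / s^2 > 0" "s^2 > 0" using d(2)[of s] by auto
      then have "\<alpha> s > 0" by (simp add: zero_less_divide_iff)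
      then show "kappa D n + \<alpha> s > kappa D n" by simp
    qed (rule d(1))
  qed
  have D1: "k < 3/2 \<longleftrightarrow> D < 1 / (8 * (real n)\<^sup>2 * pi\<^sup>2)"
  proof -
    have "D < 1 / (8 * (real n)\<^sup>2 * pi\<^sup>2) \<longleftrightarrow> D * (8 * ((real n)\<^sup>2 * pi\<^sup>2)) < 1"
      using cpos by (simp add: less_divide_eq mult.assoc)
    then show ?thesis by (simp add: kdef algebra_simps)
  qed
  have D2: "k > 3/2 \<longleftrightarrow> D > 1 / (8 * (real n)\<^sup>2 * pi\<^sup>2)"
  proof -
    have "D > 1 / (8 * (real n)\<^sup>2 * pi\<^sup>2) \<longleftrightarrow> D * (8 * ((real n)\<^sup>2 * pi\<^sup>2)) > 1"
      using cpos by (simp add: divide_less_eq mult.assoc)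
    then show ?thesis by (simp add: kdef algebra_simps)
  qed
  show ?thesis
    using ne neg_iff pos_iff sub sup D1 D2 unfolding a2_def k_def by blast
qed

end
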